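(* Let $(!, \delta, \varepsilon, \Delta, \mathsf{e}, \mathsf{m},\mathsf{m}_K)$ be a monoidal coalgebra modality on an additive symmetric monoidal category $(\mathbb{X}, \otimes, K)$. Then for every object $A$, the symmetric comonoidal monad $(!(A) \otimes -, \mu^{\nabla_A}, \eta^{\mathsf{u}_A}, \mathsf{n}^{\Delta_A}, \mathsf{n}^{\mathsf{e}_A}_K)$ together with the natural transformation $\lambda_X := (\delta_A\otimes 1_{!(X)});\mathsf{m}_{!(A),X} : !(A)\otimes !(X)\to !(!(A)\otimes X)$ is an exponential lifting monad of $(!, \delta, \varepsilon, \Delta, \mathsf{e}, \mathsf{m},\mathsf{m}_K)$.
   Context: Composition is in diagrammatic order; $\alpha,\ell,\rho$ are associator and unitors and $\tau$ the interchange $(A\otimes B)\otimes(C\otimes D)\to(A\otimes C)\otimes(B\otimes D)$. An additive symmetric monoidal category is a symmetric monoidal category whose hom-sets are commutative monoids ($+$, $0$), with composition and $\otimes$ preserving sums and zeros in each argument (no negatives assumed). A monoidal coalgebra modality is a symmetric monoidal comonad $(!,\delta,\varepsilon,\mathsf{m},\mathsf{m}_K)$ ($\mathsf{m}_{A,B}:!(A)\otimes!(B)\to!(A\otimes B)$, $\mathsf{m}_K:K\to!(K)$) with natural cocommutative comonoids $(!(A),\Delta_A,\mathsf{e}_A)$ such that $\delta_A$ is a comonoid morphism and $\Delta,\mathsf{e}$ are monoidal transformations and $!$-coalgebra morphisms. Define $\nabla_A := (\delta_A\otimes\delta_A);\mathsf{m}_{!(A),!(A)};!\big(((\varepsilon_A\otimes\mathsf{e}_A);\rho_A)+((\mathsf{e}_A\otimes\varepsilon_A);\ell_A)\big):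 !(A)\otimes!(A)\to!(A)$ and $\mathsf{u}_A:=\mathsf{m}_K;!(0_{K,A}):K\to!(A)$; then $(!(A),\nabla_A,\mathsf{u}_A,\Delta_A,\mathsf{e}_A)$ is a commutative and cocommutative bimonoid and $((!(A),\delta_A),\nabla_A,\mathsf{u}_A)$ is a monoid in the category of $!$-coalgebras. The monad is $\mu_X=\alpha_{!(A),!(A),X};(\nabla_A\otimes1_X)$, $\eta_X=\ell^{-1}_X;(\mathsf{u}_A\otimes1_X)$, $\mathsf{n}_{X,Y}=(\Delta_A\otimes1_{X\otimes Y});\tau_{!(A),!(A),X,Y}$, $\mathsf{n}_K=\rho_{!(A)};\mathsf{e}_A$. An exponential lifting monad is a symmetric comonoidal monad $(\mathsf{T},\mu,\eta,\mathsf{n},\mathsf{n}_K)$ with a natural $\lambda_X:\mathsf{T}!(X)\to!\mathsf{T}(X)$ satisfying $\mu_{!(X)};\lambda_X=\mathsf{T}(\lambda_X);\lambda_{\mathsf{T}(X)};!(\mu_X)$, $\eta_{!(X)};\lambda_X=!(\eta_X)$, $\mathsf{T}(\delta_X);\lambda_{!(X)};!(\lambda_X)=\lambda_X;\delta_{\mathsf{T}(X)}$, $\lambda_X;\varepsilon_{\mathsf{T}(X)}=\mathsf{T}(\varepsilon_X)$, $\mathsf{n}_{!(X),!(Y)};(\lambda_X\otimes\lambda_Y);\mathsf{m}_{\mathsf{T}(X),\mathsf{T}(Y)}=\mathsf{T}(\mathsf{m}_{X,Y});\lambda_{X\otimes Y};!(\mathsf{n}_{X,Y})$ and $\mathsf{n}_K;\mathsf{m}_K=\mathsf{T}(\mathsf{m}_K);\lambda_K;!(\mathsf{n}_K)$.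 *)

theory Defs
  imports Main
begin

section \<open>Additive symmetric monoidal categories\<close>

text \<open>Composition cmp is written in
diagrammatic order: cmp S f g is f;g (first f, then g).
Convention for the associator (as in the paper's formula for mu):
asc S A B C : A (x) (B (x) C) -> (A (x) B) (x) C, with inverse asci.
lu S A : K (x) A -> A, ru S A : A (x) K -> A, sy S A B : A (x) B -> B (x) A.
pls is the sum of parallel arrows and zr S A B the zero arrow A -> B.\<close>

record ('o,'m) smc =
  arr  :: "'m set"
  src  :: "'m \<Rightarrow> 'o"
  trg  :: "'m \<Rightarrow> 'o"
  idm  :: "'o \<Rightarrow> 'm"
  cmp  :: "'m \<Rightarrow> 'm \<Rightarrow> 'm"
  tns  :: "'o \<Rightarrow> 'o \<Rightarrow> 'o"
  tnsm :: "'m \<Rightarrow> 'm \<Rightarrow> 'm"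
  kunit :: "'o"
  asc  :: "'o \<Rightarrow> 'o \<Rightarrow> 'o \<Rightarrow> 'm"
  asci :: "'o \<Rightarrow> 'o \<Rightarrow> 'o \<Rightarrow> 'm"
  lu   :: "'o \<Rightarrow> 'm"
  lui  :: "'o \<Rightarrow> 'm"
  ru   :: "'o \<Rightarrow> 'm"
  rui  :: "'o \<Rightarrow> 'm"
  sy   :: "'o \<Rightarrow> 'o \<Rightarrow> 'm"
  pls  :: "'m \<Rightarrow> 'm \<Rightarrow> 'm"
  zr   :: "'o \<Rightarrow> 'o \<Rightarrow> 'm"

definition hom :: "('o,'m) smc \<Rightarrow> 'o \<Rightarrow> 'o \<Rightarrow> 'm set" where
  "hom S A B = {f. f \<in> arr S \<and> src S f = A \<and> trg S f = B}"

definition is_category :: "('o,'m) smc \<Rightarrow> bool" where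
  "is_category S \<longleftrightarrow>
    (\<forall>A. idm S A \<in> hom S A A) \<and>
    (\<forall>A B C f g. f \<in> hom S A B \<longrightarrow> g \<in> hom S B C \<longrightarrow> cmp S f g \<in> hom S A C) \<and>
    (\<forall>A B f. f \<in> hom S A B \<longrightarrow> cmp S (idm S A) f = f \<and> cmp S f (idm S B) = f) \<and>
    (\<forall>A B C D f g h. f \<in> hom S A B \<longrightarrow> g \<in> hom S B C \<longrightarrow> h \<in> hom S C D \<longrightarrow>
        cmp S (cmp S f g) h = cmp S f (cmp S g h))"

definition is_monoidal :: "('o,'m) smc \<Rightarrow> bool" where
  "is_monoidal S \<longleftrightarrow>
    \<comment> \<open>tensor is a bifunctor\<close>
    (\<forall>A B C D f g. f \<in> hom S A B \<longrightarrow> g \<in> hom S C D \<longrightarrow>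
        tnsm S f g \<in> hom S (tns S A C) (tns S B D)) \<and>
    (\<forall>A B. tnsm S (idm S A) (idm S B) = idm S (tns S A B)) \<and>
    (\<forall>A B C D E F f g h k. f \<in> hom S A B \<longrightarrow> g \<in> hom S B C \<longrightarrow>
        h \<in> hom S D E \<longrightarrow> k \<in> hom S E F \<longrightarrow>
        tnsm S (cmp S f g) (cmp S h k) = cmp S (tnsm S f h) (tnsm S g k)) \<and>
    \<comment> \<open>associator: natural isomorphism\<close>
    (\<forall>A B C. asc S A B C \<in> hom S (tns S A (tns S B C)) (tns S (tns S A B) C) \<and>
             asci S A B C \<in> hom S (tns S (tns S A B) C) (tns S A (tns S B C)) \<and>
             cmp S (asc S A B C) (asci S A B C) = idm S (tns S A (tns S B C)) \<and>
             cmp S (asci S A B C) (asc S A B C) = idm S (tns S (tns S A B) C)) \<and>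
    (\<forall>A A' B B' C C' f g h. f \<in> hom S A A' \<longrightarrow> g \<in> hom S B B' \<longrightarrow> h \<in> hom S C C' \<longrightarrow>
        cmp S (tnsm S f (tnsm S g h)) (asc S A' B' C') =
        cmp S (asc S A B C) (tnsm S (tnsm S f g) h)) \<and>
    \<comment> \<open>left unitor\<close>
    (\<forall>A. lu S A \<in> hom S (tns S (kunit S) A) A \<and> lui S A \<in> hom S A (tns S (kunit S) A) \<and>
         cmp S (lu S A) (lui S A) = idm S (tns S (kunit S) A) \<and>
         cmp S (lui S A) (lu S A) = idm S A) \<and>
    (\<forall>A B f. f \<in> hom S A B \<longrightarrow>
        cmp S (tnsm S (idm S (kunit S)) f) (lu S B) = cmp S (lu S A) f) \<and>
    \<comment> \<open>right unitor\<close>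
    (\<forall>A. ru S A \<in> hom S (tns S A (kunit S)) A \<and> rui S A \<in> hom S A (tns S A (kunit S)) \<and>
         cmp S (ru S A) (rui S A) = idm S (tns S A (kunit S)) \<and>
         cmp S (rui S A) (ru S A) = idm S A) \<and>
    (\<forall>A B f. f \<in> hom S A B \<longrightarrow>
        cmp S (tnsm S f (idm S (kunit S))) (ru S B) = cmp S (ru S A) f) \<and>
    \<comment> \<open>pentagon\<close>
    (\<forall>A B C D.
        cmp S (asc S A B (tns S C D)) (asc S (tns S A B) C D) =
        cmp S (cmp S (tnsm S (idm S A) (asc S B C D)) (asc S A (tns S B C) D))
              (tnsm S (asc S A B C) (idm S D))) \<and>
    \<comment> \<open>triangle\<close>
    (\<forall>A B. cmp S (asc S A (kunit S) B) (tnsm S (ru S A) (idm S B)) =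
           tnsm S (idm S A) (lu S B))"

definition is_symmetric_monoidal :: "('o,'m) smc \<Rightarrow> bool" where
  "is_symmetric_monoidal S \<longleftrightarrow> is_category S \<and> is_monoidal S \<and>
    (\<forall>A B. sy S A B \<in> hom S (tns S A B) (tns S B A) \<and>
           cmp S (sy S A B) (sy S B A) = idm S (tns S A B)) \<and>
    (\<forall>A B C D f g. f \<in> hom S A B \<longrightarrow> g \<in> hom S C D \<longrightarrow>
        cmp S (tnsm S f g) (sy S B D) = cmp S (sy S A C) (tnsm S g f)) \<and>
    \<comment> \<open>hexagon\<close>
    (\<forall>A B C.
        cmp S (cmp S (asc S A B C) (sy S (tns S A B) C)) (asc S C A B) =
        cmp S (cmp S (tnsm S (idm S A) (sy S B C)) (asc S A C B)) (tnsm S (sy S A C) (idm S B)))"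

definition is_additive_smc :: "('o,'m) smc \<Rightarrow> bool" where
  "is_additive_smc S \<longleftrightarrow> is_symmetric_monoidal S \<and>
    \<comment> \<open>each hom-set is a commutative monoid\<close>
    (\<forall>A B f g. f \<in> hom S A B \<longrightarrow> g \<in> hom S A B \<longrightarrow> pls S f g \<in> hom S A B) \<and>
    (\<forall>A B. zr S A B \<in> hom S A B) \<and>
    (\<forall>A B f g h. f \<in> hom S A B \<longrightarrow> g \<in> hom S A B \<longrightarrow> h \<in> hom S A B \<longrightarrow>
        pls S (pls S f g) h = pls S f (pls S g h)) \<and>
    (\<forall>A B f g. f \<in> hom S A B \<longrightarrow> g \<in> hom S A B \<longrightarrow> pls S f g = pls S g f) \<and>
    (\<forall>A B f. f \<in> hom S A B \<longrightarrow> pls S (zr S A B) f = f) \<and>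
    \<comment> \<open>composition preserves sums and zeros in each argument\<close>
    (\<forall>A B C f g h. f \<in> hom S A B \<longrightarrow> g \<in> hom S A B \<longrightarrow> h \<in> hom S B C \<longrightarrow>
        cmp S (pls S f g) h = pls S (cmp S f h) (cmp S g h)) \<and>
    (\<forall>A B C f g h. h \<in> hom S A B \<longrightarrow> f \<in> hom S B C \<longrightarrow> g \<in> hom S B C \<longrightarrow>
        cmp S h (pls S f g) = pls S (cmp S h f) (cmp S h g)) \<and>
    (\<forall>A B C h. h \<in> hom S B C \<longrightarrow> cmp S (zr S A B) h = zr S A C) \<and>
    (\<forall>A B C h. h \<in> hom S A B \<longrightarrow> cmp S h (zr S B C) = zr S A C) \<and>
    \<comment> \<open>tensor preserves sums and zeros in each argument\<close>
    (\<forall>A B C D f g h. f \<in> hom S A B \<longrightarrow> g \<in> hom S A B \<longrightarrow> h \<in> hom S C D \<longrightarrow>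
        tnsm S (pls S f g) h = pls S (tnsm S f h) (tnsm S g h)) \<and>
    (\<forall>A B C D f g h. h \<in> hom S A B \<longrightarrow> f \<in> hom S C D \<longrightarrow> g \<in> hom S C D \<longrightarrow>
        tnsm S h (pls S f g) = pls S (tnsm S h f) (tnsm S h g)) \<and>
    (\<forall>A B C D h. h \<in> hom S C D \<longrightarrow>
        tnsm S (zr S A B) h = zr S (tns S A C) (tns S B D)) \<and>
    (\<forall>A B C D h. h \<in> hom S A B \<longrightarrow>
        tnsm S h (zr S C D) = zr S (tns S A C) (tns S B D))"

text \<open>The interchange tau : (A (x) B) (x) (C (x) D) -> (A (x) C) (x) (B (x) D).\<close>

definition tau :: "('o,'m) smc \<Rightarrow> 'o \<Rightarrow> 'o \<Rightarrow> 'o \<Rightarrow> 'o \<Rightarrow> 'm" where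
  "tau S A B C D =
     cmp S (cmp S (cmp S (cmp S
       (asci S A B (tns S C D))
       (tnsm S (idm S A) (asc S B C D)))
       (tnsm S (idm S A) (tnsm S (sy S B C) (idm S D))))
       (tnsm S (idm S A) (asci S C B D)))
       (asc S A C (tns S B D))"

section \<open>Monoidal coalgebra modalities\<close>

text \<open>bng/bngm: the functor !; dl: delta; ep: epsilon; mm A B: m_{A,B};
mk: m_K; dt: Delta; ce: e.\<close>

record ('o,'m) mcm =
  bng  :: "'o \<Rightarrow> 'o"
  bngm :: "'m \<Rightarrow> 'm"
  dl   :: "'o \<Rightarrow> 'm"
  ep   :: "'o \<Rightarrow> 'm"
  mm   :: "'o \<Rightarrow> 'o \<Rightarrow> 'm"
  mk   :: "'m"
  dt   :: "'o \<Rightarrow> 'm"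
  ce   :: "'o \<Rightarrow> 'm"

definition is_mcm :: "('o,'m) smc \<Rightarrow> ('o,'m) mcm \<Rightarrow> bool" where
  "is_mcm S M \<longleftrightarrow>
    (let K = kunit S; c = cmp S; t = tns S; tm = tnsm S; i = idm S; b = bng M; bm = bngm M in
    \<comment> \<open>! is a functor\<close>
    (\<forall>A B f. f \<in> hom S A B \<longrightarrow> bm f \<in> hom S (b A) (b B)) \<and>
    (\<forall>A. bm (i A) = i (b A)) \<and>
    (\<forall>A B C f g. f \<in> hom S A B \<longrightarrow> g \<in> hom S B C \<longrightarrow> bm (c f g) = c (bm f) (bm g)) \<and>
    \<comment> \<open>comonad\<close>
    (\<forall>A. dl M A \<in> hom S (b A) (b (b A)) \<and> ep M A \<in> hom S (b A) A) \<and>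
    (\<forall>A B f. f \<in> hom S A B \<longrightarrow> c (bm f) (dl M B) = c (dl M A) (bm (bm f))) \<and>
    (\<forall>A B f. f \<in> hom S A B \<longrightarrow> c (bm f) (ep M B) = c (ep M A) f) \<and>
    (\<forall>A. c (dl M A) (dl M (b A)) = c (dl M A) (bm (dl M A))) \<and>
    (\<forall>A. c (dl M A) (ep M (b A)) = i (b A)) \<and>
    (\<forall>A. c (dl M A) (bm (ep M A)) = i (b A)) \<and>
    \<comment> \<open>symmetric monoidal functor\<close>
    (\<forall>A B. mm M A B \<in> hom S (t (b A) (b B)) (b (t A B))) \<and>
    mk M \<in> hom S K (b K) \<and>
    (\<forall>A B C D f g. f \<in> hom S A B \<longrightarrow> g \<in> hom S C D \<longrightarrow>
        c (tm (bm f) (bm g)) (mm M B D) = c (mm M A C) (bm (tm f g))) \<and>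
    (\<forall>A B C. c (c (tm (i (b A)) (mm M B C)) (mm M A (t B C))) (bm (asc S A B C)) =
             c (c (asc S (b A) (b B) (b C)) (tm (mm M A B) (i (b C)))) (mm M (t A B) C)) \<and>
    (\<forall>A. c (c (tm (mk M) (i (b A))) (mm M K A)) (bm (lu S A)) = lu S (b A)) \<and>
    (\<forall>A. c (c (tm (i (b A)) (mk M)) (mm M A K)) (bm (ru S A)) = ru S (b A)) \<and>
    (\<forall>A B. c (sy S (b A) (b B)) (mm M B A) = c (mm M A B) (bm (sy S A B))) \<and>
    \<comment> \<open>delta and epsilon are monoidal transformations\<close>
    (\<forall>A B. c (mm M A B) (dl M (t A B)) =
           c (c (tm (dl M A) (dl M B)) (mm M (b A) (b B))) (bm (mm M A B))) \<and>
    c (mk M) (dl M K) = c (mk M) (bm (mk M)) \<and>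
    (\<forall>A B. c (mm M A B) (ep M (t A B)) = tm (ep M A) (ep M B)) \<and>
    c (mk M) (ep M K) = i K \<and>
    \<comment> \<open>natural cocommutative comonoids\<close>
    (\<forall>A. dt M A \<in> hom S (b A) (t (b A) (b A)) \<and> ce M A \<in> hom S (b A) K) \<and>
    (\<forall>A B f. f \<in> hom S A B \<longrightarrow> c (bm f) (dt M B) = c (dt M A) (tm (bm f) (bm f))) \<and>
    (\<forall>A B f. f \<in> hom S A B \<longrightarrow> c (bm f) (ce M B) = ce M A) \<and>
    (\<forall>A. c (c (dt M A) (tm (i (b A)) (dt M A))) (asc S (b A) (b A) (b A)) =
         c (dt M A) (tm (dt M A) (i (b A)))) \<and>
    (\<forall>A. c (c (dt M A) (tm (ce M A) (i (b A)))) (lu S (b A)) = i (b A)) \<and>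
    (\<forall>A. c (c (dt M A) (tm (i (b A)) (ce M A))) (ru S (b A)) = i (b A)) \<and>
    (\<forall>A. c (dt M A) (sy S (b A) (b A)) = dt M A) \<and>
    \<comment> \<open>delta is a comonoid morphism\<close>
    (\<forall>A. c (dl M A) (dt M (b A)) = c (dt M A) (tm (dl M A) (dl M A))) \<and>
    (\<forall>A. c (dl M A) (ce M (b A)) = ce M A) \<and>
    \<comment> \<open>Delta and e are monoidal transformations\<close>
    (\<forall>A B. c (mm M A B) (dt M (t A B)) =
           c (c (tm (dt M A) (dt M B)) (tau S (b A) (b A) (b B) (b B)))
             (tm (mm M A B) (mm M A B))) \<and>
    c (mk M) (dt M K) = c (lui S K) (tm (mk M) (mk M)) \<and>
    (\<forall>A B. c (mm M A B) (ce M (t A B)) = c (tm (ce M A) (ce M B)) (lu S K)) \<and>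
    c (mk M) (ce M K) = i K \<and>
    \<comment> \<open>Delta and e are !-coalgebra morphisms\<close>
    (\<forall>A. c (dt M A) (c (tm (dl M A) (dl M A)) (mm M (b A) (b A))) = c (dl M A) (bm (dt M A))) \<and>
    (\<forall>A. c (ce M A) (mk M) = c (dl M A) (bm (ce M A))))"

section \<open>Symmetric comonoidal monads and exponential lifting monads\<close>

text \<open>Data of a monad T with comonoidal structure n, n_K and a lifting lambda.
nn X Y : T(X (x) Y) -> T X (x) T Y; nk : T K -> K; lam X : T(!X) -> !(T X).\<close>

record ('o,'m) elm =
  To  :: "'o \<Rightarrow> 'o"
  Tm  :: "'m \<Rightarrow> 'm"
  mu  :: "'o \<Rightarrow> 'm"
  eta :: "'o \<Rightarrow> 'm"
  nn  :: "'o \<Rightarrow> 'o \<Rightarrow> 'm"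
  nk  :: "'m"
  lam :: "'o \<Rightarrow> 'm"

definition is_sym_comonoidal_monad :: "('o,'m) smc \<Rightarrow> ('o,'m) elm \<Rightarrow> bool" where
  "is_sym_comonoidal_monad S T \<longleftrightarrow>
    (let K = kunit S; c = cmp S; t = tns S; tm = tnsm S; i = idm S; T0 = To T; T1 = Tm T in
    \<comment> \<open>functor\<close>
    (\<forall>A B f. f \<in> hom S A B \<longrightarrow> T1 f \<in> hom S (T0 A) (T0 B)) \<and>
    (\<forall>A. T1 (i A) = i (T0 A)) \<and>
    (\<forall>A B C f g. f \<in> hom S A B \<longrightarrow> g \<in> hom S B C \<longrightarrow> T1 (c f g) = c (T1 f) (T1 g)) \<and>
    \<comment> \<open>monad\<close>
    (\<forall>A. mu T A \<in> hom S (T0 (T0 A)) (T0 A) \<and> eta T A \<in> hom S A (T0 A)) \<and>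
    (\<forall>A B f. f \<in> hom S A B \<longrightarrow> c (T1 (T1 f)) (mu T B) = c (mu T A) (T1 f)) \<and>
    (\<forall>A B f. f \<in> hom S A B \<longrightarrow> c f (eta T B) = c (eta T A) (T1 f)) \<and>
    (\<forall>A. c (mu T (T0 A)) (mu T A) = c (T1 (mu T A)) (mu T A)) \<and>
    (\<forall>A. c (eta T (T0 A)) (mu T A) = i (T0 A)) \<and>
    (\<forall>A. c (T1 (eta T A)) (mu T A) = i (T0 A)) \<and>
    \<comment> \<open>symmetric comonoidal functor\<close>
    (\<forall>A B. nn T A B \<in> hom S (T0 (t A B)) (t (T0 A) (T0 B))) \<and>
    nk T \<in> hom S (T0 K) K \<and>
    (\<forall>A B C D f g. f \<in> hom S A B \<longrightarrow> g \<in> hom S C D \<longrightarrow>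
        c (T1 (tm f g)) (nn T B D) = c (nn T A C) (tm (T1 f) (T1 g))) \<and>
    (\<forall>A B C. c (c (T1 (asc S A B C)) (nn T (t A B) C)) (tm (nn T A B) (i (T0 C))) =
             c (c (nn T A (t B C)) (tm (i (T0 A)) (nn T B C))) (asc S (T0 A) (T0 B) (T0 C))) \<and>
    (\<forall>A. c (c (nn T K A) (tm (nk T) (i (T0 A)))) (lu S (T0 A)) = T1 (lu S A)) \<and>
    (\<forall>A. c (c (nn T A K) (tm (i (T0 A)) (nk T))) (ru S (T0 A)) = T1 (ru S A)) \<and>
    (\<forall>A B. c (nn T A B) (sy S (T0 A) (T0 B)) = c (T1 (sy S A B)) (nn T B A)) \<and>
    \<comment> \<open>mu and eta are comonoidal transformations\<close>
    (\<forall>A B. c (mu T (t A B)) (nn T A B) =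
           c (c (T1 (nn T A B)) (nn T (T0 A) (T0 B))) (tm (mu T A) (mu T B))) \<and>
    c (mu T K) (nk T) = c (T1 (nk T)) (nk T) \<and>
    (\<forall>A B. c (eta T (t A B)) (nn T A B) = tm (eta T A) (eta T B)) \<and>
    c (eta T K) (nk T) = i K)"

definition is_exp_lifting_monad :: "('o,'m) smc \<Rightarrow> ('o,'m) mcm \<Rightarrow> ('o,'m) elm \<Rightarrow> bool" where
  "is_exp_lifting_monad S M T \<longleftrightarrow> is_sym_comonoidal_monad S T \<and>
    (let K = kunit S; c = cmp S; tm = tnsm S; b = bng M; bm = bngm M; T0 = To T; T1 = Tm T in
    (\<forall>X. lam T X \<in> hom S (T0 (b X)) (b (T0 X))) \<and>
    (\<forall>X Y f. f \<in> hom S X Y \<longrightarrow> c (T1 (bm f)) (lam T Y) = c (lam T X) (bm (T1 f))) \<and>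
    (\<forall>X. c (mu T (b X)) (lam T X) = c (c (T1 (lam T X)) (lam T (T0 X))) (bm (mu T X))) \<and>
    (\<forall>X. c (eta T (b X)) (lam T X) = bm (eta T X)) \<and>
    (\<forall>X. c (c (T1 (dl M X)) (lam T (b X))) (bm (lam T X)) = c (lam T X) (dl M (T0 X))) \<and>
    (\<forall>X. c (lam T X) (ep M (T0 X)) = T1 (ep M X)) \<and>
    (\<forall>X Y. c (c (nn T (b X) (b Y)) (tm (lam T X) (lam T Y))) (mm M (T0 X) (T0 Y)) =
           c (c (T1 (mm M X Y)) (lam T (tns S X Y))) (bm (nn T X Y))) \<and>
    c (nk T) (mk M) = c (c (T1 (mk M)) (lam T K)) (bm (nk T)))"

definition nabla :: "('o,'m) smc \<Rightarrow> ('o,'m) mcm \<Rightarrow> 'o \<Rightarrow> 'm" where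
  "nabla S M A =
     cmp S (cmp S (tnsm S (dl M A) (dl M A)) (mm M (bng M A) (bng M A)))
       (bngm M (pls S (cmp S (tnsm S (ep M A) (ce M A)) (ru S A))
                      (cmp S (tnsm S (ce M A) (ep M A)) (lu S A))))"

definition uu :: "('o,'m) smc \<Rightarrow> ('o,'m) mcm \<Rightarrow> 'o \<Rightarrow> 'm" where
  "uu S M A = cmp S (mk M) (bngm M (zr S (kunit S) A))"

definition bang_monad :: "('o,'m) smc \<Rightarrow> ('o,'m) mcm \<Rightarrow> 'o \<Rightarrow> ('o,'m) elm" where
  "bang_monad S M A =
    \<lparr> To = (\<lambda>X. tns S (bng M A) X),
      Tm = (\<lambda>f. tnsm S (idm S (bng M A)) f),
      mu = (\<lambda>X. cmp S (asc S (bng M A) (bng M A) X) (tnsm S (nabla S M A) (idm S X))),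
      eta = (\<lambda>X. cmp S (lui S X) (tnsm S (uu S M A) (idm S X))),
      nn = (\<lambda>X Y. cmp S (tnsm S (dt M A) (idm S (tns S X Y))) (tau S (bng M A) (bng M A) X Y)),
      nk = cmp S (ru S (bng M A)) (ce M A),
      lam = (\<lambda>X. cmp S (tnsm S (dl M A) (idm S (bng M X))) (mm M (bng M A) X)) \<rparr>"

end

theory Submission
  imports Defs
begin


locale ASMC =
  fixes S :: "('o,'m) smc"
  assumes add: "is_additive_smc S"
begin

abbreviation Ar where "Ar f \<equiv> f \<in> arr S"
abbreviation sr where "sr f \<equiv> src S f"
abbreviation tg where "tg f \<equiv> trg S f"
abbreviation cm (infixr "\<bullet>" 55) where "f \<bullet> g \<equiv> cmp S f g"
abbreviation tm (infixr "\<circledast>" 65) where "f \<circledast> g \<equiv> tnsm S f g"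
abbreviation to (infixr "\<odot>" 65) where "X \<odot> Y \<equiv> tns S X Y"
abbreviation i where "i X \<equiv> idm S X"
abbreviation K where "K \<equiv> kunit S"
abbreviation a where "a X Y Z \<equiv> asc S X Y Z"
abbreviation ai where "ai X Y Z \<equiv> asci S X Y Z"
abbreviation l where "l X \<equiv> lu S X"
abbreviation li where "li X \<equiv> lui S X"
abbreviation r where "r X \<equiv> ru S X"
abbreviation ri where "ri X \<equiv> rui S X"
abbreviation s where "s X Y \<equiv> sy S X Y"
abbreviation pl (infixl "\<uplus>" 60) where "f \<uplus> g \<equiv> pls S f g"
abbreviation z where "z X Y \<equiv> zr S X Y"

lemma ax: "is_category S" "is_monoidal S" "is_symmetric_monoidal S"
  using add unfolding is_additive_smc_def is_symmetric_monoidal_def by auto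

lemma hom_iff: "f \<in> hom S A B \<longleftrightarrow> Ar f \<and> sr f = A \<and> tg f = B"
  by (simp add: hom_def)

lemma id_ty[simp]: "Ar (i A)" "sr (i A) = A" "tg (i A) = A"
  using ax(1) unfolding is_category_def hom_iff by auto

lemma cm_ty:
  assumes "Ar f" "Ar g" "tg f = sr g"
  shows "Ar (f \<bullet> g)" "sr (f \<bullet> g) = sr f" "tg (f \<bullet> g) = tg g"
proof -
  have "f \<in> hom S (sr f) (tg f)" "g \<in> hom S (tg f) (tg g)" using assms by (auto simp: hom_iff)
  then have "f \<bullet> g \<in> hom S (sr f) (tg g)" using ax(1) unfolding is_category_def by blast
  then show "Ar (f \<bullet> g)" "sr (f \<bullet> g) = sr f" "tg (f \<bullet> g) = tg g" by (auto simp: hom_iff)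
qed

lemma idl0: "Ar f \<Longrightarrow> sr f = A \<Longrightarrow> i A \<bullet> f = f"
  using ax(1) unfolding is_category_def hom_iff by blast
lemma idr0: "Ar f \<Longrightarrow> tg f = A \<Longrightarrow> f \<bullet> i A = f"
  using ax(1) unfolding is_category_def hom_iff by blast

lemma assoc0:
  "Ar f \<Longrightarrow> Ar g \<Longrightarrow> Ar h \<Longrightarrow> tg f = sr g \<Longrightarrow> tg g = sr h \<Longrightarrow> (f \<bullet> g) \<bullet> h = f \<bullet> (g \<bullet> h)"
  using ax(1) unfolding is_category_def hom_iff by metis

lemma tm_ty:
  assumes "Ar f" "Ar g"
  shows "Ar (f \<circledast> g)" "sr (f \<circledast> g) = sr f \<odot> sr g" "tg (f \<circledast> g) = tg f \<odot> tg g"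
proof -
  have "f \<in> hom S (sr f) (tg f)" "g \<in> hom S (sr g) (tg g)" using assms by (auto simp: hom_iff)
  moreover have "\<forall>A B C D f g. f \<in> hom S A B \<longrightarrow> g \<in> hom S C D \<longrightarrow>
        tnsm S f g \<in> hom S (tns S A C) (tns S B D)" using ax(2) unfolding is_monoidal_def by (elim conjE)
  ultimately have "f \<circledast> g \<in> hom S (sr f \<odot> sr g) (tg f \<odot> tg g)" by blast
  then show "Ar (f \<circledast> g)" "sr (f \<circledast> g) = sr f \<odot> sr g" "tg (f \<circledast> g) = tg f \<odot> tg g" by (auto simp: hom_iff)
qed

lemma tm_id0: "i A \<circledast> i B = i (A \<odot> B)"
proof -
  have "\<forall>A B. tnsm S (idm S A) (idm S B) = idm S (tns S A B)" using ax(2) unfolding is_monoidal_def by (elim conjE)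
  then show ?thesis by blast
qed

lemma interchange0:
  "Ar f \<Longrightarrow> Ar g \<Longrightarrow> Ar h \<Longrightarrow> Ar k \<Longrightarrow> tg f = sr g \<Longrightarrow> tg h = sr k \<Longrightarrow>
   (f \<bullet> g) \<circledast> (h \<bullet> k) = (f \<circledast> h) \<bullet> (g \<circledast> k)"
  using ax(2) unfolding is_monoidal_def hom_iff by metis

lemma a_ty[simp]: "Ar (a X Y Z)" "sr (a X Y Z) = X \<odot> (Y \<odot> Z)" "tg (a X Y Z) = (X \<odot> Y) \<odot> Z"
    "Ar (ai X Y Z)" "sr (ai X Y Z) = (X \<odot> Y) \<odot> Z" "tg (ai X Y Z) = X \<odot> (Y \<odot> Z)"
  using ax(2) unfolding is_monoidal_def hom_iff by auto
lemma a_inv0: "a X Y Z \<bullet> ai X Y Z = i (X \<odot> (Y \<odot> Z))" "ai X Y Z \<bullet> a X Y Z = i ((X \<odot> Y) \<odot> Z)"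
  using ax(2) unfolding is_monoidal_def hom_iff by auto

lemma a_nat0:
  "Ar f \<Longrightarrow> Ar g \<Longrightarrow> Ar h \<Longrightarrow> tg f = A' \<Longrightarrow> tg g = B' \<Longrightarrow> tg h = C' \<Longrightarrow>
   (f \<circledast> (g \<circledast> h)) \<bullet> a A' B' C' = a (sr f) (sr g) (sr h) \<bullet> ((f \<circledast> g) \<circledast> h)"
  using ax(2) unfolding is_monoidal_def hom_iff by metis

lemma l_ty[simp]: "Ar (l X)" "sr (l X) = K \<odot> X" "tg (l X) = X"
    "Ar (li X)" "sr (li X) = X" "tg (li X) = K \<odot> X"
  using ax(2) unfolding is_monoidal_def hom_iff by auto
lemma l_inv0: "l X \<bullet> li X = i (K \<odot> X)" "li X \<bullet> l X = i X"
  using ax(2) unfolding is_monoidal_def hom_iff by auto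
lemma l_nat0: "Ar f \<Longrightarrow> tg f = B \<Longrightarrow> (i K \<circledast> f) \<bullet> l B = l (sr f) \<bullet> f"
  using ax(2) unfolding is_monoidal_def hom_iff by metis

lemma r_ty[simp]: "Ar (r X)" "sr (r X) = X \<odot> K" "tg (r X) = X"
    "Ar (ri X)" "sr (ri X) = X" "tg (ri X) = X \<odot> K"
  using ax(2) unfolding is_monoidal_def hom_iff by auto
lemma r_inv0: "r X \<bullet> ri X = i (X \<odot> K)" "ri X \<bullet> r X = i X"
  using ax(2) unfolding is_monoidal_def hom_iff by auto
lemma r_nat0: "Ar f \<Longrightarrow> tg f = B \<Longrightarrow> (f \<circledast> i K) \<bullet> r B = r (sr f) \<bullet> f"
  using ax(2) unfolding is_monoidal_def hom_iff by metis

lemma pentagon0: "a A B (C \<odot> D) \<bullet> a (A \<odot> B) C D =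
   ((i A \<circledast> a B C D) \<bullet> a A (B \<odot> C) D) \<bullet> (a A B C \<circledast> i D)"
  using ax(2) unfolding is_monoidal_def by blast
lemma triangle0: "a A K B \<bullet> (r A \<circledast> i B) = i A \<circledast> l B"
  using ax(2) unfolding is_monoidal_def by blast

lemma s_ty[simp]: "Ar (s X Y)" "sr (s X Y) = X \<odot> Y" "tg (s X Y) = Y \<odot> X"
  using ax(3) unfolding is_symmetric_monoidal_def hom_iff by auto
lemma s_inv0: "s X Y \<bullet> s Y X = i (X \<odot> Y)"
  using ax(3) unfolding is_symmetric_monoidal_def hom_iff by auto
lemma s_nat0: "Ar f \<Longrightarrow> Ar g \<Longrightarrow> tg f = B \<Longrightarrow> tg g = D \<Longrightarrow>
   (f \<circledast> g) \<bullet> s B D = s (sr f) (sr g) \<bullet> (g \<circledast> f)"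
  using ax(3) unfolding is_symmetric_monoidal_def hom_iff by metis
lemma hexagon0: "(a A B C \<bullet> s (A \<odot> B) C) \<bullet> a C A B =
    ((i A \<circledast> s B C) \<bullet> a A C B) \<bullet> (s A C \<circledast> i B)"
  using ax(3) unfolding is_symmetric_monoidal_def by blast

lemma addax: "(\<forall>A B f g. f \<in> hom S A B \<longrightarrow> g \<in> hom S A B \<longrightarrow> pls S f g \<in> hom S A B) \<and>
    (\<forall>A B. zr S A B \<in> hom S A B) \<and>
    (\<forall>A B f g h. f \<in> hom S A B \<longrightarrow> g \<in> hom S A B \<longrightarrow> h \<in> hom S A B \<longrightarrow>
        pls S (pls S f g) h = pls S f (pls S g h)) \<and>
    (\<forall>A B f g. f \<in> hom S A B \<longrightarrow> g \<in> hom S A B \<longrightarrow> pls S f g = pls S g f) \<and>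
    (\<forall>A B f. f \<in> hom S A B \<longrightarrow> pls S (zr S A B) f = f) \<and>
    (\<forall>A B C f g h. f \<in> hom S A B \<longrightarrow> g \<in> hom S A B \<longrightarrow> h \<in> hom S B C \<longrightarrow>
        cmp S (pls S f g) h = pls S (cmp S f h) (cmp S g h)) \<and>
    (\<forall>A B C f g h. h \<in> hom S A B \<longrightarrow> f \<in> hom S B C \<longrightarrow> g \<in> hom S B C \<longrightarrow>
        cmp S h (pls S f g) = pls S (cmp S h f) (cmp S h g)) \<and>
    (\<forall>A B C h. h \<in> hom S B C \<longrightarrow> cmp S (zr S A B) h = zr S A C) \<and>
    (\<forall>A B C h. h \<in> hom S A B \<longrightarrow> cmp S h (zr S B C) = zr S A C) \<and>
    (\<forall>A B C D f g h. f \<in> hom S A B \<longrightarrow> g \<in> hom S A B \<longrightarrow> h \<in> hom S C D \<longrightarrow>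
        tnsm S (pls S f g) h = pls S (tnsm S f h) (tnsm S g h)) \<and>
    (\<forall>A B C D f g h. h \<in> hom S A B \<longrightarrow> f \<in> hom S C D \<longrightarrow> g \<in> hom S C D \<longrightarrow>
        tnsm S h (pls S f g) = pls S (tnsm S h f) (tnsm S h g)) \<and>
    (\<forall>A B C D h. h \<in> hom S C D \<longrightarrow>
        tnsm S (zr S A B) h = zr S (tns S A C) (tns S B D)) \<and>
    (\<forall>A B C D h. h \<in> hom S A B \<longrightarrow>
        tnsm S h (zr S C D) = zr S (tns S A C) (tns S B D))"
  using add unfolding is_additive_smc_def by (elim conjE) (intro conjI; assumption)

lemma pl_ty: "Ar f \<Longrightarrow> Ar g \<Longrightarrow> sr g = sr f \<Longrightarrow> tg g = tg f \<Longrightarrow> Ar (f \<uplus> g)"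
   "Ar f \<Longrightarrow> Ar g \<Longrightarrow> sr g = sr f \<Longrightarrow> tg g = tg f \<Longrightarrow> sr (f \<uplus> g) = sr f"
   "Ar f \<Longrightarrow> Ar g \<Longrightarrow> sr g = sr f \<Longrightarrow> tg g = tg f \<Longrightarrow> tg (f \<uplus> g) = tg f"
  using addax unfolding hom_iff by metis+
lemma z_ty[simp]: "Ar (z X Y)" "sr (z X Y) = X" "tg (z X Y) = Y"
  using addax unfolding hom_iff by metis+

lemma pl_zero0: "Ar f \<Longrightarrow> sr f = X \<Longrightarrow> tg f = Y \<Longrightarrow> z X Y \<uplus> f = f"
  using addax unfolding hom_iff by metis
lemma pl_comm0: "Ar f \<Longrightarrow> Ar g \<Longrightarrow> sr g = sr f \<Longrightarrow> tg g = tg f \<Longrightarrow> f \<uplus> g = g \<uplus> f"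
  using addax unfolding hom_iff by metis
lemma pl_assoc0: "Ar f \<Longrightarrow> Ar g \<Longrightarrow> Ar h \<Longrightarrow> sr g = sr f \<Longrightarrow> tg g = tg f \<Longrightarrow> sr h = sr f \<Longrightarrow> tg h = tg f
   \<Longrightarrow> (f \<uplus> g) \<uplus> h = f \<uplus> (g \<uplus> h)"
  using addax unfolding hom_iff by metis
lemma cm_pl_l0: "Ar f \<Longrightarrow> Ar g \<Longrightarrow> Ar h \<Longrightarrow> sr g = sr f \<Longrightarrow> tg g = tg f \<Longrightarrow> tg f = sr h \<Longrightarrow>
    (f \<uplus> g) \<bullet> h = (f \<bullet> h) \<uplus> (g \<bullet> h)"
  using addax unfolding hom_iff by metis
lemma cm_pl_r0: "Ar f \<Longrightarrow> Ar g \<Longrightarrow> Ar h \<Longrightarrow> sr g = sr f \<Longrightarrow> tg g = tg f \<Longrightarrow> tg h = sr f \<Longrightarrow>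
    h \<bullet> (f \<uplus> g) = (h \<bullet> f) \<uplus> (h \<bullet> g)"
  using addax unfolding hom_iff by metis
lemma cm_z_l0: "Ar h \<Longrightarrow> sr h = B \<Longrightarrow> z A B \<bullet> h = z A (tg h)"
  using addax unfolding hom_iff by metis
lemma cm_z_r0: "Ar h \<Longrightarrow> tg h = B \<Longrightarrow> h \<bullet> z B C = z (sr h) C"
  using addax unfolding hom_iff by metis
lemma tm_pl_l0: "Ar f \<Longrightarrow> Ar g \<Longrightarrow> Ar h \<Longrightarrow> sr g = sr f \<Longrightarrow> tg g = tg f \<Longrightarrow>
    (f \<uplus> g) \<circledast> h = (f \<circledast> h) \<uplus> (g \<circledast> h)"
  using addax unfolding hom_iff by metis
lemma tm_pl_r0: "Ar f \<Longrightarrow> Ar g \<Longrightarrow> Ar h \<Longrightarrow> sr g = sr f \<Longrightarrow> tg g = tg f \<Longrightarrow>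
    h \<circledast> (f \<uplus> g) = (h \<circledast> f) \<uplus> (h \<circledast> g)"
  using addax unfolding hom_iff by metis
lemma tm_z_l0: "Ar h \<Longrightarrow> z A B \<circledast> h = z (A \<odot> sr h) (B \<odot> tg h)"
  using addax unfolding hom_iff by metis
lemma tm_z_r0: "Ar h \<Longrightarrow> h \<circledast> z A B = z (sr h \<odot> A) (tg h \<odot> B)"
  using addax unfolding hom_iff by metis

end

context ASMC begin

definition cc (infixr "\<cdot>" 55) where
  "f \<cdot> g = (if Ar f \<and> Ar g \<and> tg f = sr g then f \<bullet> g else z (sr f) (tg g))"
definition tt (infixr "\<otimes>" 65) where
  "f \<otimes> g = (if Ar f \<and> Ar g then f \<circledast> g else z (sr f \<odot> sr g) (tg f \<odot> tg g))"
definition pp (infixl "\<oplus>" 60) where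
  "f \<oplus> g = (if Ar f \<and> Ar g \<and> sr g = sr f \<and> tg g = tg f then f \<uplus> g else z (sr f) (tg f))"

lemma cc_ty[simp]: "Ar (f \<cdot> g)" "sr (f \<cdot> g) = sr f" "tg (f \<cdot> g) = tg g"
  by (auto simp: cc_def cm_ty)
lemma tt_ty[simp]: "Ar (f \<otimes> g)" "sr (f \<otimes> g) = sr f \<odot> sr g" "tg (f \<otimes> g) = tg f \<odot> tg g"
  by (auto simp: tt_def tm_ty)
lemma pp_ty[simp]: "Ar (f \<oplus> g)" "sr (f \<oplus> g) = sr f" "tg (f \<oplus> g) = tg f"
  by (auto simp: pp_def pl_ty)

lemma cmp_cc: "Ar f \<Longrightarrow> Ar g \<Longrightarrow> tg f = sr g \<Longrightarrow> f \<bullet> g = f \<cdot> g"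
  by (simp add: cc_def)
lemma tnsm_tt: "Ar f \<Longrightarrow> Ar g \<Longrightarrow> f \<circledast> g = f \<otimes> g"
  by (simp add: tt_def)
lemma pls_pp: "Ar f \<Longrightarrow> Ar g \<Longrightarrow> sr g = sr f \<Longrightarrow> tg g = tg f \<Longrightarrow> f \<uplus> g = f \<oplus> g"
  by (simp add: pp_def)

lemma z_cc[simp]: "z A B \<cdot> h = z A (tg h)" "h \<cdot> z B C = z (sr h) C"
  by (auto simp: cc_def cm_z_l0 cm_z_r0)
lemma z_tt[simp]: "z A B \<otimes> h = z (A \<odot> sr h) (B \<odot> tg h)" "h \<otimes> z B C = z (sr h \<odot> B) (tg h \<odot> C)"
  by (auto simp: tt_def tm_z_l0 tm_z_r0)

lemma cc_eq: "Ar f \<Longrightarrow> Ar g \<Longrightarrow> tg f = sr g \<Longrightarrow> f \<cdot> g = f \<bullet> g"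
  by (simp add: cc_def)
lemma cc_ne: "\<not> (Ar f \<and> Ar g \<and> tg f = sr g) \<Longrightarrow> f \<cdot> g = z (sr f) (tg g)"
  unfolding cc_def by (simp only: if_False)
lemma cc_cases: "(\<not> (Ar f \<and> Ar g \<and> tg f = sr g) \<and> f \<cdot> g = z (sr f) (tg g)) \<or> (Ar f \<and> Ar g \<and> tg f = sr g \<and> f \<cdot> g = f \<bullet> g)"
  by (simp add: cc_def)

lemma cassoc[simp]: "(f \<cdot> g) \<cdot> h = f \<cdot> (g \<cdot> h)"
proof (cases "Ar f \<and> Ar g \<and> Ar h \<and> tg f = sr g \<and> tg g = sr h")
  case True
  then have "f \<cdot> g = f \<bullet> g" "g \<cdot> h = g \<bullet> h" by (simp_all add: cc_def)
  moreover have "Ar (f \<bullet> g)" "sr (f \<bullet> g) = sr f" "tg (f \<bullet> g) = tg g" using True cm_ty by auto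
  moreover have "Ar (g \<bullet> h)" "sr (g \<bullet> h) = sr g" "tg (g \<bullet> h) = tg h" using True cm_ty by auto
  ultimately show ?thesis using True by (simp add: cc_def assoc0)
next
  case False
  have L: "(f \<cdot> g) \<cdot> h = z (sr f) (tg h)"
  proof (cases "Ar h \<and> tg g = sr h")
    case True
    then have e: "(f \<cdot> g) \<cdot> h = (f \<cdot> g) \<bullet> h" by (simp add: cc_eq)
    from False True have "f \<cdot> g = z (sr f) (tg g)" using cc_ne by auto
    then show ?thesis using e True cm_z_l0 by simp
  next
    case False
    then show ?thesis using cc_ne by auto
  qed
  have R: "f \<cdot> (g \<cdot> h) = z (sr f) (tg h)"
  proof (cases "Ar f \<and> tg f = sr g")
    case True
    then have e: "f \<cdot> (g \<cdot> h) = f \<bullet> (g \<cdot> h)" by (simp add: cc_eq)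
    from False True have "g \<cdot> h = z (sr g) (tg h)" using cc_ne by auto
    then show ?thesis using e True cm_z_r0 by simp
  next
    case False
    then show ?thesis using cc_ne by auto
  qed
  show ?thesis using L R by simp
qed

lemma idl[simp]: "Ar f \<Longrightarrow> sr f = A \<Longrightarrow> i A \<cdot> f = f"
  by (simp add: cc_def idl0)
lemma idr[simp]: "Ar f \<Longrightarrow> tg f = A \<Longrightarrow> f \<cdot> i A = f"
  by (simp add: cc_def idr0)
lemma id_split: "i (A \<odot> B) = i A \<otimes> i B"
  by (simp add: tt_def tm_id0)
lemma tm_id[simp]: "i A \<otimes> i B = i (A \<odot> B)"
  by (simp add: tt_def tm_id0)

definition isI where "isI f \<longleftrightarrow> Ar f \<and> f = i (sr f)"
lemma isI_i[simp]: "isI (i A)" by (simp add: isI_def)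
lemma isI_E: "isI f \<Longrightarrow> \<exists>A. f = i A" unfolding isI_def by blast
lemma isI_t[simp]: "isI f \<Longrightarrow> isI g \<Longrightarrow> isI (f \<otimes> g)"
proof -
  assume "isI f" "isI g"
  then obtain A B where "f = i A" "g = i B" using isI_E by blast
  then show ?thesis unfolding isI_def by (simp  add: id_split[symmetric])
qed
lemma isI_l[simp]: "isI f \<Longrightarrow> Ar h \<Longrightarrow> tg f = sr h \<Longrightarrow> f \<cdot> h = h"
  using isI_E by fastforce
lemma isI_r[simp]: "isI f \<Longrightarrow> Ar h \<Longrightarrow> tg h = sr f \<Longrightarrow> h \<cdot> f = h"
  using isI_E by fastforce

lemma merge[simp]: "tg f = sr g \<Longrightarrow> tg h = sr k \<Longrightarrow> (f \<otimes> h) \<cdot> (g \<otimes> k) = (f \<cdot> g) \<otimes> (h \<cdot> k)"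
proof (cases "Ar f \<and> Ar g \<and> Ar h \<and> Ar k")
  case True
  then show "tg f = sr g \<Longrightarrow> tg h = sr k \<Longrightarrow> ?thesis"
    by (simp add: cc_def tt_def tm_ty cm_ty interchange0)
next
  case False
  then show "tg f = sr g \<Longrightarrow> tg h = sr k \<Longrightarrow> ?thesis"
    by (auto simp: cc_def tt_def tm_ty cm_ty cm_z_l0 cm_z_r0 tm_z_l0 tm_z_r0)
qed
lemma merge2[simp]: "tg f = sr g \<Longrightarrow> tg h = sr k \<Longrightarrow> (f \<otimes> h) \<cdot> ((g \<otimes> k) \<cdot> x) = ((f \<cdot> g) \<otimes> (h \<cdot> k)) \<cdot> x"
  by (simp flip: cassoc)

lemma split: "tg f = sr g \<Longrightarrow> tg h = sr k \<Longrightarrow> (f \<cdot> g) \<otimes> (h \<cdot> k) = (f \<otimes> h) \<cdot> (g \<otimes> k)"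
  by simp

lemma ctx2: "f \<cdot> g = h \<Longrightarrow> f \<cdot> (g \<cdot> x) = h \<cdot> x"
  by (simp flip: cassoc)
lemma ctx3: "f \<cdot> (g \<cdot> k) = h \<Longrightarrow> f \<cdot> (g \<cdot> (k \<cdot> x)) = h \<cdot> x"
  by (simp flip: cassoc)
lemma ctx4: "f \<cdot> (g \<cdot> (k \<cdot> m)) = h \<Longrightarrow> f \<cdot> (g \<cdot> (k \<cdot> (m \<cdot> x))) = h \<cdot> x"
  by (simp flip: cassoc)
lemma ctx5: "f \<cdot> (g \<cdot> (k \<cdot> (m \<cdot> n))) = h \<Longrightarrow> f \<cdot> (g \<cdot> (k \<cdot> (m \<cdot> (n \<cdot> x)))) = h \<cdot> x"
  by (simp flip: cassoc)

lemma a_inv[simp]: "a X Y Z \<cdot> ai X Y Z = i (X \<odot> (Y \<odot> Z))" "ai X Y Z \<cdot> a X Y Z = i ((X \<odot> Y) \<odot> Z)"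
  by (simp_all add: cc_def a_inv0 )
lemma a_inv2[simp]: "Ar h \<Longrightarrow> sr h = X \<odot> (Y \<odot> Z) \<Longrightarrow> a X Y Z \<cdot> (ai X Y Z \<cdot> h) = h"
   "Ar h \<Longrightarrow> sr h = (X \<odot> Y) \<odot> Z \<Longrightarrow> ai X Y Z \<cdot> (a X Y Z \<cdot> h) = h"
  by (simp_all add: ctx2 )
lemma l_inv[simp]: "l X \<cdot> li X = i (K \<odot> X)" "li X \<cdot> l X = i X"
  by (simp_all add: cc_def l_inv0 )
lemma l_inv2[simp]: "Ar h \<Longrightarrow> sr h = K \<odot> X \<Longrightarrow> l X \<cdot> (li X \<cdot> h) = h"
   "Ar h \<Longrightarrow> sr h = X \<Longrightarrow> li X \<cdot> (l X \<cdot> h) = h"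
  by (simp_all add: ctx2 )
lemma r_inv[simp]: "r X \<cdot> ri X = i (X \<odot> K)" "ri X \<cdot> r X = i X"
  by (simp_all add: cc_def r_inv0 )
lemma r_inv2[simp]: "Ar h \<Longrightarrow> sr h = X \<odot> K \<Longrightarrow> r X \<cdot> (ri X \<cdot> h) = h"
   "Ar h \<Longrightarrow> sr h = X \<Longrightarrow> ri X \<cdot> (r X \<cdot> h) = h"
  by (simp_all add: ctx2 )
lemma s_inv[simp]: "s X Y \<cdot> s Y X = i (X \<odot> Y)"
  by (simp_all add: cc_def s_inv0 )
lemma s_inv2[simp]: "Ar h \<Longrightarrow> sr h = X \<odot> Y \<Longrightarrow> s X Y \<cdot> (s Y X \<cdot> h) = h"
  by (simp_all add: ctx2 )

lemma a_nat: "Ar f \<Longrightarrow> Ar g \<Longrightarrow> Ar h \<Longrightarrow> tg f = A' \<Longrightarrow> tg g = B' \<Longrightarrow> tg h = C' \<Longrightarrow>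
   (f \<otimes> (g \<otimes> h)) \<cdot> a A' B' C' = a (sr f) (sr g) (sr h) \<cdot> ((f \<otimes> g) \<otimes> h)"
  by (simp add: cc_def tt_def tm_ty a_nat0)
lemma a_nat': "Ar f \<Longrightarrow> Ar g \<Longrightarrow> Ar h \<Longrightarrow> sr f = A \<Longrightarrow> sr g = B \<Longrightarrow> sr h = C \<Longrightarrow>
   a A B C \<cdot> ((f \<otimes> g) \<otimes> h) = (f \<otimes> (g \<otimes> h)) \<cdot> a (tg f) (tg g) (tg h)"
  using a_nat by metis
lemma ai_nat: "Ar f \<Longrightarrow> Ar g \<Longrightarrow> Ar h \<Longrightarrow> tg f = A' \<Longrightarrow> tg g = B' \<Longrightarrow> tg h = C' \<Longrightarrow>
   ((f \<otimes> g) \<otimes> h) \<cdot> ai A' B' C' = ai (sr f) (sr g) (sr h) \<cdot> (f \<otimes> (g \<otimes> h))"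
proof -
  assume h: "Ar f" "Ar g" "Ar h" "tg f = A'" "tg g = B'" "tg h = C'"
  have "((f \<otimes> g) \<otimes> h) \<cdot> ai A' B' C' = ai (sr f) (sr g) (sr h) \<cdot> (a (sr f) (sr g) (sr h) \<cdot> (((f \<otimes> g) \<otimes> h) \<cdot> ai A' B' C'))"
    by (simp )
  also have "\<dots> = ai (sr f) (sr g) (sr h) \<cdot> ((f \<otimes> (g \<otimes> h)) \<cdot> (a A' B' C' \<cdot> ai A' B' C'))"
    using h by (simp add: ctx2[OF a_nat'] )
  also have "\<dots> = ai (sr f) (sr g) (sr h) \<cdot> (f \<otimes> (g \<otimes> h))"
    using h by (simp )
  finally show ?thesis .
qed
lemma ai_nat': "Ar f \<Longrightarrow> Ar g \<Longrightarrow> Ar h \<Longrightarrow> sr f = A \<Longrightarrow> sr g = B \<Longrightarrow> sr h = C \<Longrightarrow>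
   ai A B C \<cdot> (f \<otimes> (g \<otimes> h)) = ((f \<otimes> g) \<otimes> h) \<cdot> ai (tg f) (tg g) (tg h)"
  using ai_nat by metis

lemma l_nat: "Ar f \<Longrightarrow> tg f = B \<Longrightarrow> (i K \<otimes> f) \<cdot> l B = l (sr f) \<cdot> f"
  by (simp add: cc_def tt_def tm_ty l_nat0 )
lemma r_nat: "Ar f \<Longrightarrow> tg f = B \<Longrightarrow> (f \<otimes> i K) \<cdot> r B = r (sr f) \<cdot> f"
  by (simp add: cc_def tt_def tm_ty r_nat0 )
lemma s_nat: "Ar f \<Longrightarrow> Ar g \<Longrightarrow> tg f = B \<Longrightarrow> tg g = D \<Longrightarrow>
   (f \<otimes> g) \<cdot> s B D = s (sr f) (sr g) \<cdot> (g \<otimes> f)"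
  by (simp add: cc_def tt_def tm_ty s_nat0)

lemma pentagon: "a A B (C \<odot> D) \<cdot> a (A \<odot> B) C D =
   (i A \<otimes> a B C D) \<cdot> (a A (B \<odot> C) D \<cdot> (a A B C \<otimes> i D))"
  using pentagon0[of A B C D] by (simp add: cmp_cc tnsm_tt)
lemma triangle: "a A K B \<cdot> (r A \<otimes> i B) = i A \<otimes> l B"
  using triangle0[of A B] by (simp add: cmp_cc tnsm_tt)
lemma hexagon: "a A B C \<cdot> (s (A \<odot> B) C \<cdot> a C A B) =
    (i A \<otimes> s B C) \<cdot> (a A C B \<cdot> (s A C \<otimes> i B))"
  using hexagon0[of A B C] by (simp add: cmp_cc tnsm_tt)

end

context ASMC begin

lemma faithK: "f \<otimes> i K = g \<otimes> i K \<Longrightarrow> Ar f \<Longrightarrow> Ar g \<Longrightarrow> sr f = sr g \<Longrightarrow> tg f = tg g \<Longrightarrow> f = g"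
proof -
  assume h: "Ar f" "Ar g" "sr f = sr g" "tg f = tg g" "f \<otimes> i K = g \<otimes> i K"
  have "\<And>f. Ar f \<Longrightarrow> f = ri (sr f) \<cdot> ((f \<otimes> i K) \<cdot> r (tg f))"
    by (simp add: r_nat)
  from this[OF h(1)] this[OF h(2)] h show ?thesis by metis
qed

lemma Kfaith: "i K \<otimes> f = i K \<otimes> g \<Longrightarrow> Ar f \<Longrightarrow> Ar g \<Longrightarrow> sr f = sr g \<Longrightarrow> tg f = tg g \<Longrightarrow> f = g"
proof -
  assume h: "Ar f" "Ar g" "sr f = sr g" "tg f = tg g" "i K \<otimes> f = i K \<otimes> g"
  have "\<And>f. Ar f \<Longrightarrow> f = li (sr f) \<cdot> ((i K \<otimes> f) \<cdot> l (tg f))"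
    by (simp add: l_nat)
  from this[OF h(1)] this[OF h(2)] h show ?thesis by metis
qed

lemma K1: "a K A B \<cdot> (l A \<otimes> i B) = l (A \<odot> B)"
proof -
  have e1: "a K K (A\<odot>B) \<cdot> (a (K\<odot>K) A B \<cdot> ((r K \<otimes> i A) \<otimes> i B)) = (i K \<otimes> l (A\<odot>B)) \<cdot> a K A B"
    by (simp add: a_nat' ctx2[OF triangle])
  have e2: "(i K \<otimes> a K A B) \<cdot> (a K (K\<odot>A) B \<cdot> ((a K K A \<otimes> i B) \<cdot> ((r K \<otimes> i A) \<otimes> i B)))
     = (i K \<otimes> (a K A B \<cdot> (l A \<otimes> i B))) \<cdot> a K A B"
    by (simp add: triangle a_nat' ctx2[OF a_nat'])
  have "(i K \<otimes> l (A\<odot>B)) \<cdot> a K A B = (i K \<otimes> (a K A B \<cdot> (l A \<otimes> i B))) \<cdot> a K A B"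
    using e1 e2 by (simp add: ctx2[OF pentagon])
  then have "((i K \<otimes> l (A\<odot>B)) \<cdot> a K A B) \<cdot> ai K A B = ((i K \<otimes> (a K A B \<cdot> (l A \<otimes> i B))) \<cdot> a K A B) \<cdot> ai K A B"
    by simp
  then have "i K \<otimes> l (A\<odot>B) = i K \<otimes> (a K A B \<cdot> (l A \<otimes> i B))"
    by simp
  then show ?thesis by (rule Kfaith[symmetric]) simp_all
qed


lemma K1i: "ai K A B \<cdot> l (A \<odot> B) = l A \<otimes> i B"
  by (simp flip: K1)
lemma K1i2: "Ar h \<Longrightarrow> sr h = A \<odot> B \<Longrightarrow> ai K A B \<cdot> (l (A \<odot> B) \<cdot> h) = (l A \<otimes> i B) \<cdot> h"
  by (simp add: ctx2[OF K1i])

lemma s_nat': "Ar f \<Longrightarrow> Ar g \<Longrightarrow> sr f = Y \<Longrightarrow> sr g = X \<Longrightarrow> s X Y \<cdot> (f \<otimes> g) = (g \<otimes> f) \<cdot> s (tg g) (tg f)"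
  using s_nat[of g f] by simp
lemma a_nat_i: "Ar h \<Longrightarrow> sr h = C \<Longrightarrow> a A B C \<cdot> (i (A \<odot> B) \<otimes> h) = (i A \<otimes> (i B \<otimes> h)) \<cdot> a A B (tg h)"
  using a_nat'[of "i A" "i B" h A B C] by simp
lemma a_nat_i2: "Ar h \<Longrightarrow> Ar x \<Longrightarrow> sr h = C \<Longrightarrow> a A B C \<cdot> ((i (A \<odot> B) \<otimes> h) \<cdot> x) = (i A \<otimes> (i B \<otimes> h)) \<cdot> (a A B (tg h) \<cdot> x)"
  by (simp add: ctx2[OF a_nat_i])
lemma r_nat': "Ar f \<Longrightarrow> sr f = A \<Longrightarrow> r A \<cdot> f = (f \<otimes> i K) \<cdot> r (tg f)"
  using r_nat by simp
lemma l_nat': "Ar f \<Longrightarrow> sr f = A \<Longrightarrow> l A \<cdot> f = (i K \<otimes> f) \<cdot> l (tg f)"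
  using l_nat by simp

lemma K2: "a A B K \<cdot> r (A \<odot> B) = i A \<otimes> r B"
proof -
  have e1: "a A B (K\<odot>K) \<cdot> (a (A\<odot>B) K K \<cdot> (r (A\<odot>B) \<otimes> i K)) = (i A \<otimes> a B K K) \<cdot> (a A (B\<odot>K) K \<cdot> ((i A \<otimes> r B) \<otimes> i K))"
  proof -
    have "a A B (K\<odot>K) \<cdot> (a (A\<odot>B) K K \<cdot> (r (A\<odot>B) \<otimes> i K)) = a A B (K\<odot>K) \<cdot> (i (A\<odot>B) \<otimes> l K)"
      by (simp add: triangle)
    also have "\<dots> = (i A \<otimes> (i B \<otimes> l K)) \<cdot> a A B K" by (simp add: a_nat_i)
    also have "\<dots> = (i A \<otimes> (a B K K \<cdot> (r B \<otimes> i K))) \<cdot> a A B K" by (simp add: triangle)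
    also have "\<dots> = (i A \<otimes> a B K K) \<cdot> ((i A \<otimes> (r B \<otimes> i K)) \<cdot> a A B K)" by simp
    also have "\<dots> = (i A \<otimes> a B K K) \<cdot> (a A (B\<odot>K) K \<cdot> ((i A \<otimes> r B) \<otimes> i K))" by (simp add: a_nat)
    finally show ?thesis .
  qed
  have "(i A \<otimes> a B K K) \<cdot> (a A (B\<odot>K) K \<cdot> ((a A B K \<cdot> r (A\<odot>B)) \<otimes> i K)) =
        (i A \<otimes> a B K K) \<cdot> (a A (B\<odot>K) K \<cdot> ((i A \<otimes> r B) \<otimes> i K))"
    using e1 by (simp add: ctx2[OF pentagon])
  then have "ai A (B\<odot>K) K \<cdot> ((i A \<otimes> ai B K K) \<cdot> ((i A \<otimes> a B K K) \<cdot> (a A (B\<odot>K) K \<cdot> ((a A B K \<cdot> r (A\<odot>B)) \<otimes> i K)))) =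
        ai A (B\<odot>K) K \<cdot> ((i A \<otimes> ai B K K) \<cdot> ((i A \<otimes> a B K K) \<cdot> (a A (B\<odot>K) K \<cdot> ((i A \<otimes> r B) \<otimes> i K))))"
    by simp
  then have "(a A B K \<cdot> r (A\<odot>B)) \<otimes> i K = (i A \<otimes> r B) \<otimes> i K"
    by simp
  then show ?thesis by (rule faithK) simp_all
qed
lemma K2_2: "Ar h \<Longrightarrow> sr h = A \<odot> B \<Longrightarrow> a A B K \<cdot> (r (A \<odot> B) \<cdot> h) = (i A \<otimes> r B) \<cdot> h"
  by (simp add: ctx2[OF K2])

lemma K3: "l K = r K"
proof -
  have "(i K \<otimes> l K) \<cdot> l K = l (K \<odot> K) \<cdot> l K" by (simp add: l_nat)
  then have "((i K \<otimes> l K) \<cdot> l K) \<cdot> li K = (l (K \<odot> K) \<cdot> l K) \<cdot> li K" by simp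
  then have e: "i K \<otimes> l K = l (K \<odot> K)" by simp
  have "a K K K \<cdot> (r K \<otimes> i K) = a K K K \<cdot> (l K \<otimes> i K)" by (simp add: triangle K1 e)
  then have "ai K K K \<cdot> (a K K K \<cdot> (r K \<otimes> i K)) = ai K K K \<cdot> (a K K K \<cdot> (l K \<otimes> i K))" by simp
  then have "r K \<otimes> i K = l K \<otimes> i K" by simp
  then show ?thesis by (rule faithK[symmetric]) simp_all
qed

lemma SU: "s K B \<cdot> r B = l B"
proof -
  have "(i K \<otimes> l B) \<cdot> s K B = (i K \<otimes> (s K B \<cdot> r B)) \<cdot> s K B"
  proof -
    have "(i K \<otimes> l B) \<cdot> s K B = a K K B \<cdot> ((r K \<otimes> i B) \<cdot> s K B)" by (simp add: ctx2[OF triangle])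
    also have "\<dots> = a K K B \<cdot> (s (K\<odot>K) B \<cdot> (i B \<otimes> r K))" by (simp add: s_nat')
    also have "\<dots> = a K K B \<cdot> (s (K\<odot>K) B \<cdot> (a B K K \<cdot> r (B \<odot> K)))" by (simp add: K2)
    also have "\<dots> = (i K \<otimes> s K B) \<cdot> (a K B K \<cdot> ((s K B \<otimes> i K) \<cdot> r (B \<odot> K)))" by (simp add: ctx3[OF hexagon])
    also have "\<dots> = (i K \<otimes> s K B) \<cdot> (a K B K \<cdot> (r (K \<odot> B) \<cdot> s K B))" by (simp add: r_nat)
    also have "\<dots> = (i K \<otimes> (s K B \<cdot> r B)) \<cdot> s K B" by (simp add: K2_2)
    finally show ?thesis .
  qed
  then have "((i K \<otimes> l B) \<cdot> s K B) \<cdot> s B K = ((i K \<otimes> (s K B \<cdot> r B)) \<cdot> s K B) \<cdot> s B K" by simp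
  then have "i K \<otimes> l B = i K \<otimes> (s K B \<cdot> r B)" by simp
  then show ?thesis by (rule Kfaith[symmetric]) simp_all
qed
lemma SU2: "s B K \<cdot> l B = r B"
  by (simp flip: SU)


lemma pent_i: "(ai A B C \<otimes> i D) \<cdot> (ai A (B\<odot>C) D \<cdot> (i A \<otimes> ai B C D)) = ai (A\<odot>B) C D \<cdot> ai A B (C\<odot>D)"
proof -
  have "(ai A B C \<otimes> i D) \<cdot> (ai A (B\<odot>C) D \<cdot> (i A \<otimes> ai B C D)) =
     (ai A B C \<otimes> i D) \<cdot> (ai A (B\<odot>C) D \<cdot> ((i A \<otimes> ai B C D) \<cdot> (a A B (C \<odot> D) \<cdot> (a (A \<odot> B) C D \<cdot> (ai (A\<odot>B) C D \<cdot> ai A B (C\<odot>D))))))"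
    by simp
  also have "\<dots> = ai (A\<odot>B) C D \<cdot> ai A B (C\<odot>D)"
    by (subst ctx2[OF pentagon]) simp
  finally show ?thesis .
qed
lemma ai_exp: "ai A B (C\<odot>D) = a (A\<odot>B) C D \<cdot> ((ai A B C \<otimes> i D) \<cdot> (ai A (B\<odot>C) D \<cdot> (i A \<otimes> ai B C D)))"
  by (simp add: pent_i)
lemma a_exp: "a (A\<odot>B) C D = ai A B (C\<odot>D) \<cdot> ((i A \<otimes> a B C D) \<cdot> (a A (B\<odot>C) D \<cdot> (a A B C \<otimes> i D)))"
  by (simp flip: pentagon)

lemma a_nat_i3: "Ar f \<Longrightarrow> tg f = A' \<Longrightarrow> (f \<otimes> i (B\<odot>C)) \<cdot> a A' B C = a (sr f) B C \<cdot> ((f \<otimes> i B) \<otimes> i C)"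
  using a_nat[of f "i B" "i C"] by simp
lemma ai_nat_i3: "Ar f \<Longrightarrow> sr f = A \<Longrightarrow> ai A B C \<cdot> (f \<otimes> i (B\<odot>C)) = ((f \<otimes> i B) \<otimes> i C) \<cdot> ai (tg f) B C"
  using ai_nat'[of f "i B" "i C"] by simp
lemma ai_nat_i1: "Ar h \<Longrightarrow> tg h = C' \<Longrightarrow> (i (A\<odot>B) \<otimes> h) \<cdot> ai A B C' = ai A B (sr h) \<cdot> (i A \<otimes> (i B \<otimes> h))"
  using ai_nat[of "i A" "i B" h] by simp

definition gm where "gm B C D = a B C D \<cdot> ((s B C \<otimes> i D) \<cdot> ai C B D)"
lemma gm_ty[simp]: "Ar (gm B C D)" "sr (gm B C D) = B \<odot> (C \<odot> D)" "tg (gm B C D) = C \<odot> (B \<odot> D)"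
  by (simp_all add: gm_def)
lemma gm_inv[simp]: "gm B C D \<cdot> gm C B D = i (B \<odot> (C \<odot> D))"
  by (simp add: gm_def)
lemma gm_inv2[simp]: "Ar h \<Longrightarrow> sr h = B \<odot> (C \<odot> D) \<Longrightarrow> gm B C D \<cdot> (gm C B D \<cdot> h) = h"
  by (simp add: ctx2[OF gm_inv] del: tm_id)

lemma gmG: "gm B C (D\<odot>E) = (i B \<otimes> a C D E) \<cdot> (a B (C\<odot>D) E \<cdot> ((gm B C D \<otimes> i E) \<cdot> (ai C (B\<odot>D) E \<cdot> (i C \<otimes> ai B D E))))"
proof -
  have "gm B C (D\<odot>E) = a B C (D\<odot>E) \<cdot> ((s B C \<otimes> i (D\<odot>E)) \<cdot> (a (C\<odot>B) D E \<cdot> ((ai C B D \<otimes> i E) \<cdot> (ai C (B\<odot>D) E \<cdot> (i C \<otimes> ai B D E)))))"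
    by (simp add: gm_def ai_exp)
  also have "\<dots> = a B C (D\<odot>E) \<cdot> (a (B\<odot>C) D E \<cdot> (((s B C \<otimes> i D) \<otimes> i E) \<cdot> ((ai C B D \<otimes> i E) \<cdot> (ai C (B\<odot>D) E \<cdot> (i C \<otimes> ai B D E)))))"
    by (simp add: ctx2[OF a_nat_i3] del: merge2 merge)
  also have "\<dots> = (i B \<otimes> a C D E) \<cdot> (a B (C\<odot>D) E \<cdot> ((gm B C D \<otimes> i E) \<cdot> (ai C (B\<odot>D) E \<cdot> (i C \<otimes> ai B D E))))"
    by (simp add: ctx2[OF pentagon] gm_def)
  finally show ?thesis .
qed


lemma Hs1: "s (X\<odot>Y) Z = ai X Y Z \<cdot> ((i X \<otimes> s Y Z) \<cdot> (a X Z Y \<cdot> ((s X Z \<otimes> i Y) \<cdot> ai Z X Y)))"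
proof -
  have "s (X\<odot>Y) Z = ai X Y Z \<cdot> (a X Y Z \<cdot> (s (X\<odot>Y) Z \<cdot> (a Z X Y \<cdot> ai Z X Y)))" by simp
  also have "\<dots> = ai X Y Z \<cdot> ((i X \<otimes> s Y Z) \<cdot> (a X Z Y \<cdot> ((s X Z \<otimes> i Y) \<cdot> ai Z X Y)))"
    by (subst ctx3[OF hexagon]) simp
  finally show ?thesis .
qed

lemma Hs2: "s X (Y\<odot>Z) = a X Y Z \<cdot> ((s X Y \<otimes> i Z) \<cdot> (ai Y X Z \<cdot> ((i Y \<otimes> s X Z) \<cdot> a Y Z X)))"
proof -
  let ?R = "a X Y Z \<cdot> ((s X Y \<otimes> i Z) \<cdot> (ai Y X Z \<cdot> ((i Y \<otimes> s X Z) \<cdot> a Y Z X)))"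
  have "?R = ?R \<cdot> (s (Y\<odot>Z) X \<cdot> s X (Y\<odot>Z))" by simp
  also have "\<dots> = s X (Y\<odot>Z)" by (simp only: Hs1[of Y Z X]) simp
  finally show ?thesis by simp
qed

lemma gm_s: "gm X Y Z \<cdot> ((i Y \<otimes> s X Z) \<cdot> a Y Z X) = s X (Y\<odot>Z)"
  by (simp add: Hs2 gm_def)

lemma a_nat_m: "Ar f \<Longrightarrow> Ar g \<Longrightarrow> Ar q \<Longrightarrow> sr f = A \<Longrightarrow> sr g = B \<Longrightarrow> tg f \<odot> tg g = sr q \<Longrightarrow>
   a A B C \<cdot> (((f \<otimes> g) \<cdot> q) \<otimes> i C) = (f \<otimes> (g \<otimes> i C)) \<cdot> (a (tg f) (tg g) C \<cdot> (q \<otimes> i C))"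
proof -
  assume h: "Ar f" "Ar g" "Ar q" "sr f = A" "sr g = B" "tg f \<odot> tg g = sr q"
  have "a A B C \<cdot> (((f \<otimes> g) \<cdot> q) \<otimes> i C) = a A B C \<cdot> (((f \<otimes> g) \<otimes> i C) \<cdot> (q \<otimes> i C))"
    using h by simp
  also have "\<dots> = ((f \<otimes> (g \<otimes> i C)) \<cdot> a (tg f) (tg g) C) \<cdot> (q \<otimes> i C)"
    using h by (simp only: ctx2[OF a_nat'] id_ty)
  also have "\<dots> = (f \<otimes> (g \<otimes> i C)) \<cdot> (a (tg f) (tg g) C \<cdot> (q \<otimes> i C))"
    by (simp only: cassoc)
  finally show ?thesis .
qed

lemma pent_A: "Ar R \<Longrightarrow> Ar h \<Longrightarrow> sr R = (X\<odot>Z)\<odot>Y \<Longrightarrow> sr h = W \<Longrightarrow>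
  a X (Z\<odot>Y) W \<cdot> ((a X Z Y \<cdot> R) \<otimes> h) = (i X \<otimes> ai Z Y W) \<cdot> (a X Z (Y\<odot>W) \<cdot> (a (X\<odot>Z) Y W \<cdot> (R \<otimes> h)))"
proof -
  assume H: "Ar R" "Ar h" "sr R = (X\<odot>Z)\<odot>Y" "sr h = W"
  have "a X (Z\<odot>Y) W \<cdot> ((a X Z Y \<cdot> R) \<otimes> h) = (i X \<otimes> ai Z Y W) \<cdot> ((i X \<otimes> a Z Y W) \<cdot> (a X (Z\<odot>Y) W \<cdot> ((a X Z Y \<otimes> i W) \<cdot> (R \<otimes> h))))"
    using H by simp
  also have "\<dots> = (i X \<otimes> ai Z Y W) \<cdot> ((a X Z (Y\<odot>W) \<cdot> a (X\<odot>Z) Y W) \<cdot> (R \<otimes> h))"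
    by (simp only: ctx3[OF pentagon[symmetric]])
  also have "\<dots> = (i X \<otimes> ai Z Y W) \<cdot> (a X Z (Y\<odot>W) \<cdot> (a (X\<odot>Z) Y W \<cdot> (R \<otimes> h)))"
    by (simp only: cassoc)
  finally show ?thesis .
qed

lemma pent_B: "a (Z\<odot>X) Y W \<cdot> ((ai Z X Y \<otimes> i W) \<cdot> ai Z (X\<odot>Y) W) = ai Z X (Y\<odot>W) \<cdot> (i Z \<otimes> a X Y W)"
proof -
  have "a (Z\<odot>X) Y W \<cdot> ((ai Z X Y \<otimes> i W) \<cdot> ai Z (X\<odot>Y) W) = ai Z X (Y\<odot>W) \<cdot> (a Z X (Y\<odot>W) \<cdot> (a (Z\<odot>X) Y W \<cdot> ((ai Z X Y \<otimes> i W) \<cdot> ai Z (X\<odot>Y) W)))"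
    by simp
  also have "\<dots> = ai Z X (Y\<odot>W) \<cdot> (i Z \<otimes> a X Y W)"
    by (subst ctx2[OF pentagon]) simp
  finally show ?thesis .
qed

lemma gmH1: "gm (X\<odot>Y) Z W = (ai X Y (Z\<odot>W) \<cdot> ((i X \<otimes> gm Y Z W) \<cdot> (gm X Z (Y\<odot>W) \<cdot> (i Z \<otimes> a X Y W))))"
proof -
  have "gm (X\<odot>Y) Z W = (ai X Y (Z\<odot>W) \<cdot> ((i X \<otimes> a Y Z W) \<cdot> (a X (Y\<odot>Z) W \<cdot> ((((i X \<otimes> s Y Z) \<cdot> (a X Z Y \<cdot> ((s X Z \<otimes> i Y) \<cdot> ai Z X Y))) \<otimes> i W) \<cdot> ai Z (X\<odot>Y) W))))"
    by (simp add: gm_def Hs1 a_exp)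
  also have "\<dots> = (ai X Y (Z\<odot>W) \<cdot> ((i X \<otimes> (a Y Z W \<cdot> (s Y Z \<otimes> i W))) \<cdot> (a X (Z\<odot>Y) W \<cdot> (((a X Z Y \<cdot> ((s X Z \<otimes> i Y) \<cdot> ai Z X Y)) \<otimes> i W) \<cdot> ai Z (X\<odot>Y) W))))"
    by (simp add: a_nat_m ctx2[OF a_nat_m])
  also have "\<dots> = (ai X Y (Z\<odot>W) \<cdot> ((i X \<otimes> gm Y Z W) \<cdot> (a X Z (Y\<odot>W) \<cdot> (a (X\<odot>Z) Y W \<cdot> ((((s X Z \<otimes> i Y) \<cdot> ai Z X Y) \<otimes> i W) \<cdot> ai Z (X\<odot>Y) W)))))"
    by (simp add: pent_A ctx2[OF pent_A] gm_def)
  also have "\<dots> = (ai X Y (Z\<odot>W) \<cdot> ((i X \<otimes> gm Y Z W) \<cdot> (a X Z (Y\<odot>W) \<cdot> ((s X Z \<otimes> i (Y\<odot>W)) \<cdot> (a (Z\<odot>X) Y W \<cdot> ((ai Z X Y \<otimes> i W) \<cdot> ai Z (X\<odot>Y) W))))))"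
    by (simp add: a_nat_m ctx2[OF a_nat_m])
  also have "\<dots> = (ai X Y (Z\<odot>W) \<cdot> ((i X \<otimes> gm Y Z W) \<cdot> (gm X Z (Y\<odot>W) \<cdot> (i Z \<otimes> a X Y W))))"
    by (simp add: pent_B ctx3[OF pent_B] gm_def)
  finally show ?thesis .
qed


lemma pent_C: "Ar R \<Longrightarrow> Ar h \<Longrightarrow> sr R = Y\<odot>(X\<odot>Z) \<Longrightarrow> sr h = W \<Longrightarrow>
  a (Y\<odot>X) Z W \<cdot> ((ai Y X Z \<cdot> R) \<otimes> h) = ai Y X (Z\<odot>W) \<cdot> ((i Y \<otimes> a X Z W) \<cdot> (a Y (X\<odot>Z) W \<cdot> (R \<otimes> h)))"
proof -
  assume H: "Ar R" "Ar h" "sr R = Y\<odot>(X\<odot>Z)" "sr h = W"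
  have "a (Y\<odot>X) Z W \<cdot> ((ai Y X Z \<cdot> R) \<otimes> h) = ai Y X (Z\<odot>W) \<cdot> ((a Y X (Z\<odot>W) \<cdot> a (Y\<odot>X) Z W) \<cdot> ((ai Y X Z \<otimes> i W) \<cdot> (R \<otimes> h)))"
    using H by simp
  also have "\<dots> = ai Y X (Z\<odot>W) \<cdot> ((i Y \<otimes> a X Z W) \<cdot> (a Y (X\<odot>Z) W \<cdot> (R \<otimes> h)))"
    using H by (simp only: pentagon) simp
  finally show ?thesis .
qed
lemma pent_D: "a Y (Z\<odot>X) W \<cdot> ((a Y Z X \<otimes> i W) \<cdot> ai (Y\<odot>Z) X W) = (i Y \<otimes> ai Z X W) \<cdot> a Y Z (X\<odot>W)"
proof -
  have "a Y (Z\<odot>X) W \<cdot> ((a Y Z X \<otimes> i W) \<cdot> ai (Y\<odot>Z) X W) = (i Y \<otimes> ai Z X W) \<cdot> (((i Y \<otimes> a Z X W) \<cdot> (a Y (Z\<odot>X) W \<cdot> (a Y Z X \<otimes> i W))) \<cdot> ai (Y\<odot>Z) X W)"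
    by simp
  also have "\<dots> = (i Y \<otimes> ai Z X W) \<cdot> a Y Z (X\<odot>W)"
    by (simp only: pentagon[symmetric]) simp
  finally show ?thesis .
qed

lemma gmH2: "gm X (Y\<odot>Z) W = ((i X \<otimes> ai Y Z W) \<cdot> (gm X Y (Z\<odot>W) \<cdot> ((i Y \<otimes> gm X Z W) \<cdot> a Y Z (X\<odot>W))))"
proof -
  have "gm X (Y\<odot>Z) W = (a X (Y\<odot>Z) W \<cdot> (((a X Y Z \<cdot> ((s X Y \<otimes> i Z) \<cdot> (ai Y X Z \<cdot> ((i Y \<otimes> s X Z) \<cdot> a Y Z X)))) \<otimes> i W) \<cdot> ai (Y\<odot>Z) X W))"
    by (simp add: gm_def Hs2)
  also have "\<dots> = ((i X \<otimes> ai Y Z W) \<cdot> (a X Y (Z\<odot>W) \<cdot> (a (X\<odot>Y) Z W \<cdot> ((((s X Y \<otimes> i Z) \<cdot> (ai Y X Z \<cdot> ((i Y \<otimes> s X Z) \<cdot> a Y Z X))) \<otimes> i W) \<cdot> ai (Y\<odot>Z) X W))))"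
    by (simp add: pent_A ctx2[OF pent_A])
  also have "\<dots> = ((i X \<otimes> ai Y Z W) \<cdot> (a X Y (Z\<odot>W) \<cdot> ((s X Y \<otimes> i (Z\<odot>W)) \<cdot> (a (Y\<odot>X) Z W \<cdot> (((ai Y X Z \<cdot> ((i Y \<otimes> s X Z) \<cdot> a Y Z X)) \<otimes> i W) \<cdot> ai (Y\<odot>Z) X W)))))"
    by (simp add: a_nat_m ctx2[OF a_nat_m] gm_def)
  also have "\<dots> = ((i X \<otimes> ai Y Z W) \<cdot> (a X Y (Z\<odot>W) \<cdot> ((s X Y \<otimes> i (Z\<odot>W)) \<cdot> (ai Y X (Z\<odot>W) \<cdot> ((i Y \<otimes> a X Z W) \<cdot> (a Y (X\<odot>Z) W \<cdot> ((((i Y \<otimes> s X Z) \<cdot> a Y Z X) \<otimes> i W) \<cdot> ai (Y\<odot>Z) X W)))))))"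
    by (simp add: pent_C ctx2[OF pent_C])
  also have "\<dots> = ((i X \<otimes> ai Y Z W) \<cdot> (gm X Y (Z\<odot>W) \<cdot> ((i Y \<otimes> (a X Z W \<cdot> (s X Z \<otimes> i W))) \<cdot> (a Y (Z\<odot>X) W \<cdot> ((a Y Z X \<otimes> i W) \<cdot> ai (Y\<odot>Z) X W)))))"
    by (simp add: a_nat_m ctx2[OF a_nat_m] gm_def)
  also have "\<dots> = ((i X \<otimes> ai Y Z W) \<cdot> (gm X Y (Z\<odot>W) \<cdot> ((i Y \<otimes> gm X Z W) \<cdot> a Y Z (X\<odot>W))))"
    by (simp add: pent_D gm_def)
  finally show ?thesis .
qed


lemma gm_nat: "Ar f \<Longrightarrow> Ar g \<Longrightarrow> Ar h \<Longrightarrow> tg g = B' \<Longrightarrow> tg f = C' \<Longrightarrow> tg h = D' \<Longrightarrow>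
  (g \<otimes> (f \<otimes> h)) \<cdot> gm B' C' D' = gm (sr g) (sr f) (sr h) \<cdot> (f \<otimes> (g \<otimes> h))"
  by (simp add: gm_def a_nat ctx2[OF a_nat] s_nat ai_nat' ctx2[OF ai_nat'])

abbreviation ta where "ta A B C D \<equiv> tau S A B C D"
lemma tau_eq: "ta A B C D = ai A B (C\<odot>D) \<cdot> ((i A \<otimes> gm B C D) \<cdot> a A C (B\<odot>D))"
  unfolding tau_def by (simp add: cmp_cc tnsm_tt gm_def)
lemma ta_ty[simp]: "Ar (ta A B C D)" "sr (ta A B C D) = (A\<odot>B)\<odot>(C\<odot>D)" "tg (ta A B C D) = (A\<odot>C)\<odot>(B\<odot>D)"
  by (simp_all add: tau_eq)
lemma ta_inv[simp]: "ta A B C D \<cdot> ta A C B D = i ((A\<odot>B)\<odot>(C\<odot>D))"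
  by (simp add: tau_eq)
lemma ta_inv2[simp]: "Ar h \<Longrightarrow> sr h = (A\<odot>B)\<odot>(C\<odot>D) \<Longrightarrow> ta A B C D \<cdot> (ta A C B D \<cdot> h) = h"
  by (simp add: ctx2[OF ta_inv] del: tm_id)

lemma ta_nat: "Ar f \<Longrightarrow> Ar g \<Longrightarrow> Ar h \<Longrightarrow> Ar k \<Longrightarrow> tg f = A' \<Longrightarrow> tg g = B' \<Longrightarrow> tg h = C' \<Longrightarrow> tg k = D' \<Longrightarrow>
  ((f \<otimes> g) \<otimes> (h \<otimes> k)) \<cdot> ta A' B' C' D' = ta (sr f) (sr g) (sr h) (sr k) \<cdot> ((f \<otimes> h) \<otimes> (g \<otimes> k))"
proof -
  assume H: "Ar f" "Ar g" "Ar h" "Ar k" "tg f = A'" "tg g = B'" "tg h = C'" "tg k = D'"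
  have "((f \<otimes> g) \<otimes> (h \<otimes> k)) \<cdot> ta A' B' C' D' = ai (sr f) (sr g) (sr h \<odot> sr k) \<cdot> ((f \<otimes> (g \<otimes> (h \<otimes> k))) \<cdot> ((i A' \<otimes> gm B' C' D') \<cdot> a A' C' (B'\<odot>D')))"
    using H by (simp add: tau_eq ai_nat ctx2[OF ai_nat] del: merge2 merge)
  also have "\<dots> = ai (sr f) (sr g) (sr h \<odot> sr k) \<cdot> ((f \<otimes> ((g \<otimes> (h \<otimes> k)) \<cdot> gm B' C' D')) \<cdot> a A' C' (B'\<odot>D'))"
    using H by simp
  also have "\<dots> = ai (sr f) (sr g) (sr h \<odot> sr k) \<cdot> ((f \<otimes> (gm (sr g) (sr h) (sr k) \<cdot> (h \<otimes> (g \<otimes> k)))) \<cdot> a A' C' (B'\<odot>D'))"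
    using H by (simp add: gm_nat)
  also have "\<dots> = ai (sr f) (sr g) (sr h \<odot> sr k) \<cdot> ((i (sr f) \<otimes> gm (sr g) (sr h) (sr k)) \<cdot> ((f \<otimes> (h \<otimes> (g \<otimes> k))) \<cdot> a A' C' (B'\<odot>D')))"
    using H by simp
  also have "\<dots> = ta (sr f) (sr g) (sr h) (sr k) \<cdot> ((f \<otimes> h) \<otimes> (g \<otimes> k))"
    using H by (simp add: tau_eq a_nat del: merge merge2)
  finally show ?thesis .
qed
lemma ta_nat': "Ar f \<Longrightarrow> Ar g \<Longrightarrow> Ar h \<Longrightarrow> Ar k \<Longrightarrow> sr f = A \<Longrightarrow> sr g = B \<Longrightarrow> sr h = C \<Longrightarrow> sr k = D \<Longrightarrow>
  ta A B C D \<cdot> ((f \<otimes> h) \<otimes> (g \<otimes> k)) = ((f \<otimes> g) \<otimes> (h \<otimes> k)) \<cdot> ta (tg f) (tg g) (tg h) (tg k)"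
  using ta_nat by metis


lemma INNER: "(a P (B\<odot>Q) (C\<odot>R) \<cdot> ((gm P B Q \<otimes> i (C\<odot>R)) \<cdot> (ai B (P\<odot>Q) (C\<odot>R) \<cdot> ((i B \<otimes> gm (P\<odot>Q) C R) \<cdot> a B C ((P\<odot>Q)\<odot>R))))) = ((i P \<otimes> ta B Q C R) \<cdot> (gm P (B\<odot>C) (Q\<odot>R) \<cdot> (i (B\<odot>C) \<otimes> a P Q R)))"
proof -
  have "((i P \<otimes> ta B Q C R) \<cdot> (gm P (B\<odot>C) (Q\<odot>R) \<cdot> (i (B\<odot>C) \<otimes> a P Q R))) = ((i P \<otimes> ai B Q (C\<odot>R)) \<cdot> ((i P \<otimes> (i B \<otimes> gm Q C R)) \<cdot> (gm P B (C\<odot>(Q\<odot>R)) \<cdot> ((i B \<otimes> gm P C (Q\<odot>R)) \<cdot> (a B C (P\<odot>(Q\<odot>R)) \<cdot> (i (B\<odot>C) \<otimes> a P Q R))))))"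
    by (simp add: tau_eq gmH2)
  also have "\<dots> = ((i P \<otimes> ai B Q (C\<odot>R)) \<cdot> (gm P B (Q\<odot>(C\<odot>R)) \<cdot> ((i B \<otimes> (i P \<otimes> gm Q C R)) \<cdot> ((i B \<otimes> gm P C (Q\<odot>R)) \<cdot> ((i B \<otimes> (i C \<otimes> a P Q R)) \<cdot> a B C ((P\<odot>Q)\<odot>R))))))"
    by (simp add: gm_nat ctx2[OF gm_nat] a_nat_i del: merge merge2)
  also have "\<dots> = ((i P \<otimes> ai B Q (C\<odot>R)) \<cdot> (gm P B (Q\<odot>(C\<odot>R)) \<cdot> ((i B \<otimes> (a P Q (C\<odot>R) \<cdot> gm (P\<odot>Q) C R)) \<cdot> a B C ((P\<odot>Q)\<odot>R))))"
    by (simp add: gmH1)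
  also have "\<dots> = (a P (B\<odot>Q) (C\<odot>R) \<cdot> ((gm P B Q \<otimes> i (C\<odot>R)) \<cdot> (ai B (P\<odot>Q) (C\<odot>R) \<cdot> ((i B \<otimes> gm (P\<odot>Q) C R) \<cdot> a B C ((P\<odot>Q)\<odot>R)))))"
    by (simp add: gmG)
  finally show ?thesis by simp
qed

lemma TA: "(a (A\<odot>P) (B\<odot>Q) (C\<odot>R) \<cdot> ((ta A P B Q \<otimes> i (C\<odot>R)) \<cdot> ta (A\<odot>B) (P\<odot>Q) C R)) = ((i (A\<odot>P) \<otimes> ta B Q C R) \<cdot> (ta A P (B\<odot>C) (Q\<odot>R) \<cdot> (a A B C \<otimes> a P Q R)))"
proof -
  have "(a (A\<odot>P) (B\<odot>Q) (C\<odot>R) \<cdot> ((ta A P B Q \<otimes> i (C\<odot>R)) \<cdot> ta (A\<odot>B) (P\<odot>Q) C R)) = (a (A\<odot>P) (B\<odot>Q) (C\<odot>R) \<cdot> (((ai A P (B\<odot>Q) \<cdot> ((i A \<otimes> gm P B Q) \<cdot> a A B (P\<odot>Q))) \<otimes> i (C\<odot>R)) \<cdot> (ai (A\<odot>B) (P\<odot>Q) (C\<odot>R) \<cdot> ((i (A\<odot>B) \<otimes> gm (P\<odot>Q) C R) \<cdot> a (A\<odot>B) C ((P\<odot>Q)\<odot>R)))))"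
    by (simp add: tau_eq)
  also have "\<dots> = (ai A P ((B\<odot>Q)\<odot>(C\<odot>R)) \<cdot> ((i A \<otimes> a P (B\<odot>Q) (C\<odot>R)) \<cdot> (a A (P\<odot>(B\<odot>Q)) (C\<odot>R) \<cdot> ((((i A \<otimes> gm P B Q) \<cdot> a A B (P\<odot>Q)) \<otimes> i (C\<odot>R)) \<cdot> (ai (A\<odot>B) (P\<odot>Q) (C\<odot>R) \<cdot> ((i (A\<odot>B) \<otimes> gm (P\<odot>Q) C R) \<cdot> a (A\<odot>B) C ((P\<odot>Q)\<odot>R)))))))"
    by (simp add: pent_C ctx2[OF pent_C] del: merge merge2)
  also have "\<dots> = (ai A P ((B\<odot>Q)\<odot>(C\<odot>R)) \<cdot> ((i A \<otimes> a P (B\<odot>Q) (C\<odot>R)) \<cdot> ((i A \<otimes> (gm P B Q \<otimes> i (C\<odot>R))) \<cdot> (a A (B\<odot>(P\<odot>Q)) (C\<odot>R) \<cdot> ((a A B (P\<odot>Q) \<otimes> i (C\<odot>R)) \<cdot> (ai (A\<odot>B) (P\<odot>Q) (C\<odot>R) \<cdot> ((i (A\<odot>B) \<otimes> gm (P\<odot>Q) C R) \<cdot> a (A\<odot>B) C ((P\<odot>Q)\<odot>R))))))))"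
    by (simp add: a_nat_m ctx2[OF a_nat_m] del: merge merge2)
  also have "\<dots> = (ai A P ((B\<odot>Q)\<odot>(C\<odot>R)) \<cdot> ((i A \<otimes> a P (B\<odot>Q) (C\<odot>R)) \<cdot> ((i A \<otimes> (gm P B Q \<otimes> i (C\<odot>R))) \<cdot> ((i A \<otimes> ai B (P\<odot>Q) (C\<odot>R)) \<cdot> (a A B ((P\<odot>Q)\<odot>(C\<odot>R)) \<cdot> ((i (A\<odot>B) \<otimes> gm (P\<odot>Q) C R) \<cdot> a (A\<odot>B) C ((P\<odot>Q)\<odot>R)))))))"
    by (simp add: pent_D ctx3[OF pent_D] del: merge merge2)
  also have "\<dots> = (ai A P ((B\<odot>Q)\<odot>(C\<odot>R)) \<cdot> ((i A \<otimes> a P (B\<odot>Q) (C\<odot>R)) \<cdot> ((i A \<otimes> (gm P B Q \<otimes> i (C\<odot>R))) \<cdot> ((i A \<otimes> ai B (P\<odot>Q) (C\<odot>R)) \<cdot> ((i A \<otimes> (i B \<otimes> gm (P\<odot>Q) C R)) \<cdot> (a A B (C\<odot>((P\<odot>Q)\<odot>R)) \<cdot> a (A\<odot>B) C ((P\<odot>Q)\<odot>R)))))))"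
    by (simp add: a_nat_i ctx2[OF a_nat_i] del: merge merge2)
  also have "\<dots> = (ai A P ((B\<odot>Q)\<odot>(C\<odot>R)) \<cdot> ((i A \<otimes> (a P (B\<odot>Q) (C\<odot>R) \<cdot> ((gm P B Q \<otimes> i (C\<odot>R)) \<cdot> (ai B (P\<odot>Q) (C\<odot>R) \<cdot> ((i B \<otimes> gm (P\<odot>Q) C R) \<cdot> a B C ((P\<odot>Q)\<odot>R)))))) \<cdot> (a A (B\<odot>C) ((P\<odot>Q)\<odot>R) \<cdot> (a A B C \<otimes> i ((P\<odot>Q)\<odot>R)))))"
    by (simp add: pentagon ctx2[OF pentagon])
  also have "\<dots> = (ai A P ((B\<odot>Q)\<odot>(C\<odot>R)) \<cdot> ((i A \<otimes> ((i P \<otimes> ta B Q C R) \<cdot> (gm P (B\<odot>C) (Q\<odot>R) \<cdot> (i (B\<odot>C) \<otimes> a P Q R)))) \<cdot> (a A (B\<odot>C) ((P\<odot>Q)\<odot>R) \<cdot> (a A B C \<otimes> i ((P\<odot>Q)\<odot>R)))))"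
    by (simp only: INNER)
  also have "\<dots> = (ai A P ((B\<odot>Q)\<odot>(C\<odot>R)) \<cdot> ((i A \<otimes> (i P \<otimes> ta B Q C R)) \<cdot> ((i A \<otimes> gm P (B\<odot>C) (Q\<odot>R)) \<cdot> ((i A \<otimes> (i (B\<odot>C) \<otimes> a P Q R)) \<cdot> (a A (B\<odot>C) ((P\<odot>Q)\<odot>R) \<cdot> (a A B C \<otimes> i ((P\<odot>Q)\<odot>R)))))))"
    by simp
  also have "\<dots> = (ai A P ((B\<odot>Q)\<odot>(C\<odot>R)) \<cdot> ((i A \<otimes> (i P \<otimes> ta B Q C R)) \<cdot> ((i A \<otimes> gm P (B\<odot>C) (Q\<odot>R)) \<cdot> (a A (B\<odot>C) (P\<odot>(Q\<odot>R)) \<cdot> ((i (A\<odot>(B\<odot>C)) \<otimes> a P Q R) \<cdot> (a A B C \<otimes> i ((P\<odot>Q)\<odot>R)))))))"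
    by (simp add: ctx2[OF a_nat_i] del: merge merge2)
  also have "\<dots> = (ai A P ((B\<odot>Q)\<odot>(C\<odot>R)) \<cdot> ((i A \<otimes> (i P \<otimes> ta B Q C R)) \<cdot> ((i A \<otimes> gm P (B\<odot>C) (Q\<odot>R)) \<cdot> (a A (B\<odot>C) (P\<odot>(Q\<odot>R)) \<cdot> (a A B C \<otimes> a P Q R)))))"
    by simp
  also have "\<dots> = ((i (A\<odot>P) \<otimes> ta B Q C R) \<cdot> (ta A P (B\<odot>C) (Q\<odot>R) \<cdot> (a A B C \<otimes> a P Q R)))"
    by (simp add: tau_eq ai_nat_i1 ctx2[OF ai_nat_i1] del: merge merge2)
  finally show ?thesis .
qed


lemma C1: "((i ((B1\<odot>B2)\<odot>B3) \<otimes> a X Y Z) \<cdot> (ta (B1\<odot>B2) B3 (X\<odot>Y) Z \<cdot> (ta B1 B2 X Y \<otimes> i (B3\<odot>Z)))) = ((ai B1 B2 B3 \<otimes> i (X\<odot>(Y\<odot>Z))) \<cdot> (ta B1 (B2\<odot>B3) X (Y\<odot>Z) \<cdot> ((i (B1\<odot>X) \<otimes> ta B2 B3 Y Z) \<cdot> a (B1\<odot>X) (B2\<odot>Y) (B3\<odot>Z))))"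
proof -
  have "((ta (B1\<odot>B2) B3 (X\<odot>Y) Z \<cdot> (ta B1 B2 X Y \<otimes> i (B3\<odot>Z))) \<cdot> ai (B1\<odot>X) (B2\<odot>Y) (B3\<odot>Z)) = (((ta (B1\<odot>B2) B3 (X\<odot>Y) Z \<cdot> (ta B1 B2 X Y \<otimes> i (B3\<odot>Z))) \<cdot> ai (B1\<odot>X) (B2\<odot>Y) (B3\<odot>Z))) \<cdot> (((i (B1\<odot>X) \<otimes> ta B2 Y B3 Z) \<cdot> (ta B1 X (B2\<odot>B3) (Y\<odot>Z) \<cdot> (a B1 B2 B3 \<otimes> a X Y Z))) \<cdot> ((ai B1 B2 B3 \<otimes> ai X Y Z) \<cdot> (ta B1 (B2\<odot>B3) X (Y\<odot>Z) \<cdot> (i (B1\<odot>X) \<otimes> ta B2 B3 Y Z))))"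
    by simp
  also have "\<dots> = (((ta (B1\<odot>B2) B3 (X\<odot>Y) Z \<cdot> (ta B1 B2 X Y \<otimes> i (B3\<odot>Z))) \<cdot> ai (B1\<odot>X) (B2\<odot>Y) (B3\<odot>Z))) \<cdot> ((a (B1\<odot>X) (B2\<odot>Y) (B3\<odot>Z) \<cdot> ((ta B1 X B2 Y \<otimes> i (B3\<odot>Z)) \<cdot> ta (B1\<odot>B2) (X\<odot>Y) B3 Z)) \<cdot> ((ai B1 B2 B3 \<otimes> ai X Y Z) \<cdot> (ta B1 (B2\<odot>B3) X (Y\<odot>Z) \<cdot> (i (B1\<odot>X) \<otimes> ta B2 B3 Y Z))))"
    by (simp only: TA[symmetric])
  also have "\<dots> = ((ai B1 B2 B3 \<otimes> ai X Y Z) \<cdot> (ta B1 (B2\<odot>B3) X (Y\<odot>Z) \<cdot> (i (B1\<odot>X) \<otimes> ta B2 B3 Y Z)))"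
    by simp
  finally have e: "((ta (B1\<odot>B2) B3 (X\<odot>Y) Z \<cdot> (ta B1 B2 X Y \<otimes> i (B3\<odot>Z))) \<cdot> ai (B1\<odot>X) (B2\<odot>Y) (B3\<odot>Z)) = ((ai B1 B2 B3 \<otimes> ai X Y Z) \<cdot> (ta B1 (B2\<odot>B3) X (Y\<odot>Z) \<cdot> (i (B1\<odot>X) \<otimes> ta B2 B3 Y Z)))" .
  have "((i ((B1\<odot>B2)\<odot>B3) \<otimes> a X Y Z) \<cdot> (ta (B1\<odot>B2) B3 (X\<odot>Y) Z \<cdot> (ta B1 B2 X Y \<otimes> i (B3\<odot>Z)))) = (((i ((B1\<odot>B2)\<odot>B3) \<otimes> a X Y Z) \<cdot> ((ta (B1\<odot>B2) B3 (X\<odot>Y) Z \<cdot> (ta B1 B2 X Y \<otimes> i (B3\<odot>Z))) \<cdot> ai (B1\<odot>X) (B2\<odot>Y) (B3\<odot>Z)))) \<cdot> a (B1\<odot>X) (B2\<odot>Y) (B3\<odot>Z)"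
    by simp
  also have "\<dots> = ((ai B1 B2 B3 \<otimes> i (X\<odot>(Y\<odot>Z))) \<cdot> (ta B1 (B2\<odot>B3) X (Y\<odot>Z) \<cdot> ((i (B1\<odot>X) \<otimes> ta B2 B3 Y Z) \<cdot> a (B1\<odot>X) (B2\<odot>Y) (B3\<odot>Z))))"
    by (simp only: e) simp
  finally show ?thesis .
qed

lemma C2: "ta A B K X \<cdot> (r A \<otimes> i (B\<odot>X)) = (i (A\<odot>B) \<otimes> l X) \<cdot> ai A B X"
  by (simp add: tau_eq triangle ctx2[OF triangle] K1i gm_def SU2 ai_nat')

lemma C4: "(ta A B C D \<cdot> s (A\<odot>C) (B\<odot>D)) = ((s A B \<otimes> s C D) \<cdot> ta B A D C)"
proof -
  have "(ta A B C D \<cdot> s (A\<odot>C) (B\<odot>D)) = (ai A B (C\<odot>D) \<cdot> ((i A \<otimes> gm B C D) \<cdot> (a A C (B\<odot>D) \<cdot> (gm (A\<odot>C) B D \<cdot> ((i B \<otimes> s (A\<odot>C) D) \<cdot> a B D (A\<odot>C))))))" by (simp add: tau_eq gm_s[symmetric])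
  also have "\<dots> = (ai A B (C\<odot>D) \<cdot> (gm A B (C\<odot>D) \<cdot> ((i B \<otimes> a A C D) \<cdot> ((i B \<otimes> s (A\<odot>C) D) \<cdot> a B D (A\<odot>C)))))" by (simp add: gmH1)
  also have "\<dots> = ((s A B \<otimes> i (C\<odot>D)) \<cdot> (ai B A (C\<odot>D) \<cdot> ((i B \<otimes> ((i A \<otimes> s C D) \<cdot> (a A D C \<cdot> ((s A D \<otimes> i C) \<cdot> ai D A C)))) \<cdot> a B D (A\<odot>C))))" by (simp add: gm_def Hs1)
  also have "\<dots> = ((s A B \<otimes> i (C\<odot>D)) \<cdot> (ai B A (C\<odot>D) \<cdot> ((i B \<otimes> (i A \<otimes> s C D)) \<cdot> ((i B \<otimes> gm A D C) \<cdot> a B D (A\<odot>C)))))" by (simp add: gm_def)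
  also have "\<dots> = ((s A B \<otimes> i (C\<odot>D)) \<cdot> ((i (B\<odot>A) \<otimes> s C D) \<cdot> (ai B A (D\<odot>C) \<cdot> ((i B \<otimes> gm A D C) \<cdot> a B D (A\<odot>C)))))" by (simp add: ai_nat' ctx2[OF ai_nat'] del: merge merge2)
  also have "\<dots> = ((s A B \<otimes> s C D) \<cdot> ta B A D C)" by (simp add: tau_eq)
  finally show ?thesis .
qed

lemma tri_i: "ai X K Y \<cdot> (i X \<otimes> l Y) = r X \<otimes> i Y"
  by (simp flip: triangle)
lemma gmKl: "gm K X Y \<cdot> (i X \<otimes> l Y) = l (X\<odot>Y)"
  by (simp add: gm_def tri_i SU K1)

lemma C7: "(ta K K X Y \<cdot> (l X \<otimes> l Y)) = ((l K \<otimes> i (X\<odot>Y)) \<cdot> l (X\<odot>Y))"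
proof -
  have "(ta K K X Y \<cdot> (l X \<otimes> l Y)) = (ai K K (X\<odot>Y) \<cdot> ((i K \<otimes> gm K X Y) \<cdot> (a K X (K\<odot>Y) \<cdot> ((l X \<otimes> i (K\<odot>Y)) \<cdot> (i X \<otimes> l Y)))))" by (simp add: tau_eq)
  also have "\<dots> = (ai K K (X\<odot>Y) \<cdot> ((i K \<otimes> gm K X Y) \<cdot> (l (X\<odot>(K\<odot>Y)) \<cdot> (i X \<otimes> l Y))))" by (simp add: ctx2[OF K1] del: merge merge2)
  also have "\<dots> = (ai K K (X\<odot>Y) \<cdot> (l (K\<odot>(X\<odot>Y)) \<cdot> (gm K X Y \<cdot> (i X \<otimes> l Y))))" by (simp add: ctx2[OF l_nat] del: merge merge2)
  also have "\<dots> = ((l K \<otimes> i (X\<odot>Y)) \<cdot> l (X\<odot>Y))" by (simp add: K1i2 gmKl)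
  finally show ?thesis .
qed
lemma C7i: "li (X\<odot>Y) \<cdot> ((li K \<otimes> i (X\<odot>Y)) \<cdot> ta K K X Y) = li X \<otimes> li Y"
proof -
  have "li (X\<odot>Y) \<cdot> ((li K \<otimes> i (X\<odot>Y)) \<cdot> ta K K X Y) = li (X\<odot>Y) \<cdot> ((li K \<otimes> i (X\<odot>Y)) \<cdot> (ta K K X Y \<cdot> ((l X \<otimes> l Y) \<cdot> (li X \<otimes> li Y))))"
    by simp
  also have "\<dots> = li X \<otimes> li Y" by (simp only: ctx2[OF C7]) simp
  finally show ?thesis .
qed

end


context ASMC begin
lemma pp_comm: "Ar f \<Longrightarrow> Ar g \<Longrightarrow> sr g = sr f \<Longrightarrow> tg g = tg f \<Longrightarrow> f \<oplus> g = g \<oplus> f"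
  by (simp add: pp_def pl_comm0)
lemma pp_assoc: "Ar f \<Longrightarrow> Ar g \<Longrightarrow> Ar h \<Longrightarrow> sr g = sr f \<Longrightarrow> tg g = tg f \<Longrightarrow> sr h = sr f \<Longrightarrow> tg h = tg f
   \<Longrightarrow> (f \<oplus> g) \<oplus> h = f \<oplus> (g \<oplus> h)"
  by (simp add: pp_def pl_assoc0 pl_ty)
lemma z_pp: "Ar f \<Longrightarrow> sr f = X \<Longrightarrow> tg f = Y \<Longrightarrow> z X Y \<oplus> f = f"
  by (simp add: pp_def pl_zero0)
lemma pp_z: "Ar f \<Longrightarrow> sr f = X \<Longrightarrow> tg f = Y \<Longrightarrow> f \<oplus> z X Y = f"
  using pl_comm0[of f "z X Y"] pl_zero0[of f X Y] by (simp add: pp_def)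
lemma cc_pp_l: "Ar f \<Longrightarrow> Ar g \<Longrightarrow> Ar h \<Longrightarrow> sr g = sr f \<Longrightarrow> tg g = tg f \<Longrightarrow> tg f = sr h \<Longrightarrow>
    (f \<oplus> g) \<cdot> h = (f \<cdot> h) \<oplus> (g \<cdot> h)"
  by (simp add: pp_def cc_def pl_ty cm_ty cm_pl_l0)
lemma cc_pp_r: "Ar f \<Longrightarrow> Ar g \<Longrightarrow> Ar h \<Longrightarrow> sr g = sr f \<Longrightarrow> tg g = tg f \<Longrightarrow> tg h = sr f \<Longrightarrow>
    h \<cdot> (f \<oplus> g) = (h \<cdot> f) \<oplus> (h \<cdot> g)"
  by (simp add: pp_def cc_def pl_ty cm_ty cm_pl_r0)
lemma tt_pp_l: "Ar f \<Longrightarrow> Ar g \<Longrightarrow> Ar h \<Longrightarrow> sr g = sr f \<Longrightarrow> tg g = tg f \<Longrightarrow>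
    (f \<oplus> g) \<otimes> h = (f \<otimes> h) \<oplus> (g \<otimes> h)"
  by (simp add: pp_def tt_def pl_ty tm_ty tm_pl_l0)
lemma tt_pp_r: "Ar f \<Longrightarrow> Ar g \<Longrightarrow> Ar h \<Longrightarrow> sr g = sr f \<Longrightarrow> tg g = tg f \<Longrightarrow>
    h \<otimes> (f \<oplus> g) = (h \<otimes> f) \<oplus> (h \<otimes> g)"
  by (simp add: pp_def tt_def pl_ty tm_ty tm_pl_r0)
end

locale MCM = ASMC S for S :: "('o,'m) smc" +
  fixes M :: "('o,'m) mcm"
  assumes mcm: "is_mcm S M"
begin

abbreviation b where "b X \<equiv> bng M X"
abbreviation d where "d X \<equiv> dl M X"
abbreviation eps where "eps X \<equiv> ep M X"
abbreviation m where "m X Y \<equiv> mm M X Y"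
abbreviation mK where "mK \<equiv> mk M"
abbreviation dD where "dD X \<equiv> dt M X"
abbreviation e where "e X \<equiv> ce M X"

lemmas mcm_raw = mcm[unfolded is_mcm_def Let_def]
lemmas R1 = mcm_raw[THEN conjunct1]
lemmas R2 = mcm_raw[THEN conjunct2, THEN conjunct1]
lemmas R3 = mcm_raw[THEN conjunct2, THEN conjunct2, THEN conjunct1]
lemmas R4 = mcm_raw[THEN conjunct2, THEN conjunct2, THEN conjunct2, THEN conjunct1]
lemmas R5 = mcm_raw[THEN conjunct2, THEN conjunct2, THEN conjunct2, THEN conjunct2, THEN conjunct1]
lemmas R6 = mcm_raw[THEN conjunct2, THEN conjunct2, THEN conjunct2, THEN conjunct2, THEN conjunct2, THEN conjunct1]
lemmas R7 = mcm_raw[THEN conjunct2, THEN conjunct2, THEN conjunct2, THEN conjunct2, THEN conjunct2, THEN conjunct2, THEN conjunct1]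
lemmas R8 = mcm_raw[THEN conjunct2, THEN conjunct2, THEN conjunct2, THEN conjunct2, THEN conjunct2, THEN conjunct2, THEN conjunct2, THEN conjunct1]
lemmas R9 = mcm_raw[THEN conjunct2, THEN conjunct2, THEN conjunct2, THEN conjunct2, THEN conjunct2, THEN conjunct2, THEN conjunct2, THEN conjunct2, THEN conjunct1]
lemmas R10 = mcm_raw[THEN conjunct2, THEN conjunct2, THEN conjunct2, THEN conjunct2, THEN conjunct2, THEN conjunct2, THEN conjunct2, THEN conjunct2, THEN conjunct2, THEN conjunct1]
lemmas R11 = mcm_raw[THEN conjunct2, THEN conjunct2, THEN conjunct2, THEN conjunct2, THEN conjunct2, THEN conjunct2, THEN conjunct2, THEN conjunct2, THEN conjunct2, THEN conjunct2, THEN conjunct1]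
lemmas R12 = mcm_raw[THEN conjunct2, THEN conjunct2, THEN conjunct2, THEN conjunct2, THEN conjunct2, THEN conjunct2, THEN conjunct2, THEN conjunct2, THEN conjunct2, THEN conjunct2, THEN conjunct2, THEN conjunct1]
lemmas R13 = mcm_raw[THEN conjunct2, THEN conjunct2, THEN conjunct2, THEN conjunct2, THEN conjunct2, THEN conjunct2, THEN conjunct2, THEN conjunct2, THEN conjunct2, THEN conjunct2, THEN conjunct2, THEN conjunct2, THEN conjunct1]
lemmas R14 = mcm_raw[THEN conjunct2, THEN conjunct2, THEN conjunct2, THEN conjunct2, THEN conjunct2, THEN conjunct2, THEN conjunct2, THEN conjunct2, THEN conjunct2, THEN conjunct2, THEN conjunct2, THEN conjunct2, THEN conjunct2, THEN conjunct1]
lemmas R15 = mcm_raw[THEN conjunct2, THEN conjunct2, THEN conjunct2, THEN conjunct2, THEN conjunct2, THEN conjunct2, THEN conjunct2, THEN conjunct2, THEN conjunct2, THEN conjunct2, THEN conjunct2, THEN conjunct2, THEN conjunct2, THEN conjunct2, THEN conjunct1]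
lemmas R16 = mcm_raw[THEN conjunct2, THEN conjunct2, THEN conjunct2, THEN conjunct2, THEN conjunct2, THEN conjunct2, THEN conjunct2, THEN conjunct2, THEN conjunct2, THEN conjunct2, THEN conjunct2, THEN conjunct2, THEN conjunct2, THEN conjunct2, THEN conjunct2, THEN conjunct1]
lemmas R17 = mcm_raw[THEN conjunct2, THEN conjunct2, THEN conjunct2, THEN conjunct2, THEN conjunct2, THEN conjunct2, THEN conjunct2, THEN conjunct2, THEN conjunct2, THEN conjunct2, THEN conjunct2, THEN conjunct2, THEN conjunct2, THEN conjunct2, THEN conjunct2, THEN conjunct2, THEN conjunct1]
lemmas R18 = mcm_raw[THEN conjunct2, THEN conjunct2, THEN conjunct2, THEN conjunct2, THEN conjunct2, THEN conjunct2, THEN conjunct2, THEN conjunct2, THEN conjunct2, THEN conjunct2, THEN conjunct2, THEN conjunct2, THEN conjunct2, THEN conjunct2, THEN conjunct2, THEN conjunct2, THEN conjunct2, THEN conjunct1]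
lemmas R19 = mcm_raw[THEN conjunct2, THEN conjunct2, THEN conjunct2, THEN conjunct2, THEN conjunct2, THEN conjunct2, THEN conjunct2, THEN conjunct2, THEN conjunct2, THEN conjunct2, THEN conjunct2, THEN conjunct2, THEN conjunct2, THEN conjunct2, THEN conjunct2, THEN conjunct2, THEN conjunct2, THEN conjunct2, THEN conjunct1]
lemmas R20 = mcm_raw[THEN conjunct2, THEN conjunct2, THEN conjunct2, THEN conjunct2, THEN conjunct2, THEN conjunct2, THEN conjunct2, THEN conjunct2, THEN conjunct2, THEN conjunct2, THEN conjunct2, THEN conjunct2, THEN conjunct2, THEN conjunct2, THEN conjunct2, THEN conjunct2, THEN conjunct2, THEN conjunct2, THEN conjunct2, THEN conjunct1]
lemmas R21 = mcm_raw[THEN conjunct2, THEN conjunct2, THEN conjunct2, THEN conjunct2, THEN conjunct2, THEN conjunct2, THEN conjunct2, THEN conjunct2, THEN conjunct2, THEN conjunct2, THEN conjunct2, THEN conjunct2, THEN conjunct2, THEN conjunct2, THEN conjunct2, THEN conjunct2, THEN conjunct2, THEN conjunct2, THEN conjunct2, THEN conjunct2, THEN conjunct1]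
lemmas R22 = mcm_raw[THEN conjunct2, THEN conjunct2, THEN conjunct2, THEN conjunct2, THEN conjunct2, THEN conjunct2, THEN conjunct2, THEN conjunct2, THEN conjunct2, THEN conjunct2, THEN conjunct2, THEN conjunct2, THEN conjunct2, THEN conjunct2, THEN conjunct2, THEN conjunct2, THEN conjunct2, THEN conjunct2, THEN conjunct2, THEN conjunct2, THEN conjunct2, THEN conjunct1]
lemmas R23 = mcm_raw[THEN conjunct2, THEN conjunct2, THEN conjunct2, THEN conjunct2, THEN conjunct2, THEN conjunct2, THEN conjunct2, THEN conjunct2, THEN conjunct2, THEN conjunct2, THEN conjunct2, THEN conjunct2, THEN conjunct2, THEN conjunct2, THEN conjunct2, THEN conjunct2, THEN conjunct2, THEN conjunct2, THEN conjunct2, THEN conjunct2, THEN conjunct2, THEN conjunct2, THEN conjunct1]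
lemmas R24 = mcm_raw[THEN conjunct2, THEN conjunct2, THEN conjunct2, THEN conjunct2, THEN conjunct2, THEN conjunct2, THEN conjunct2, THEN conjunct2, THEN conjunct2, THEN conjunct2, THEN conjunct2, THEN conjunct2, THEN conjunct2, THEN conjunct2, THEN conjunct2, THEN conjunct2, THEN conjunct2, THEN conjunct2, THEN conjunct2, THEN conjunct2, THEN conjunct2, THEN conjunct2, THEN conjunct2, THEN conjunct1]
lemmas R25 = mcm_raw[THEN conjunct2, THEN conjunct2, THEN conjunct2, THEN conjunct2, THEN conjunct2, THEN conjunct2, THEN conjunct2, THEN conjunct2, THEN conjunct2, THEN conjunct2, THEN conjunct2, THEN conjunct2, THEN conjunct2, THEN conjunct2, THEN conjunct2, THEN conjunct2, THEN conjunct2, THEN conjunct2, THEN conjunct2, THEN conjunct2, THEN conjunct2, THEN conjunct2, THEN conjunct2, THEN conjunct2, THEN conjunct1]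
lemmas R26 = mcm_raw[THEN conjunct2, THEN conjunct2, THEN conjunct2, THEN conjunct2, THEN conjunct2, THEN conjunct2, THEN conjunct2, THEN conjunct2, THEN conjunct2, THEN conjunct2, THEN conjunct2, THEN conjunct2, THEN conjunct2, THEN conjunct2, THEN conjunct2, THEN conjunct2, THEN conjunct2, THEN conjunct2, THEN conjunct2, THEN conjunct2, THEN conjunct2, THEN conjunct2, THEN conjunct2, THEN conjunct2, THEN conjunct2, THEN conjunct1]
lemmas R27 = mcm_raw[THEN conjunct2, THEN conjunct2, THEN conjunct2, THEN conjunct2, THEN conjunct2, THEN conjunct2, THEN conjunct2, THEN conjunct2, THEN conjunct2, THEN conjunct2, THEN conjunct2, THEN conjunct2, THEN conjunct2, THEN conjunct2, THEN conjunct2, THEN conjunct2, THEN conjunct2, THEN conjunct2, THEN conjunct2, THEN conjunct2, THEN conjunct2, THEN conjunct2, THEN conjunct2, THEN conjunct2, THEN conjunct2, THEN conjunct2, THEN conjunct1]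
lemmas R28 = mcm_raw[THEN conjunct2, THEN conjunct2, THEN conjunct2, THEN conjunct2, THEN conjunct2, THEN conjunct2, THEN conjunct2, THEN conjunct2, THEN conjunct2, THEN conjunct2, THEN conjunct2, THEN conjunct2, THEN conjunct2, THEN conjunct2, THEN conjunct2, THEN conjunct2, THEN conjunct2, THEN conjunct2, THEN conjunct2, THEN conjunct2, THEN conjunct2, THEN conjunct2, THEN conjunct2, THEN conjunct2, THEN conjunct2, THEN conjunct2, THEN conjunct2, THEN conjunct1]
lemmas R29 = mcm_raw[THEN conjunct2, THEN conjunct2, THEN conjunct2, THEN conjunct2, THEN conjunct2, THEN conjunct2, THEN conjunct2, THEN conjunct2, THEN conjunct2, THEN conjunct2, THEN conjunct2, THEN conjunct2, THEN conjunct2, THEN conjunct2, THEN conjunct2, THEN conjunct2, THEN conjunct2, THEN conjunct2, THEN conjunct2, THEN conjunct2, THEN conjunct2, THEN conjunct2, THEN conjunct2, THEN conjunct2, THEN conjunct2, THEN conjunct2, THEN conjunct2, THEN conjunct2, THEN conjunct1]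
lemmas R30 = mcm_raw[THEN conjunct2, THEN conjunct2, THEN conjunct2, THEN conjunct2, THEN conjunct2, THEN conjunct2, THEN conjunct2, THEN conjunct2, THEN conjunct2, THEN conjunct2, THEN conjunct2, THEN conjunct2, THEN conjunct2, THEN conjunct2, THEN conjunct2, THEN conjunct2, THEN conjunct2, THEN conjunct2, THEN conjunct2, THEN conjunct2, THEN conjunct2, THEN conjunct2, THEN conjunct2, THEN conjunct2, THEN conjunct2, THEN conjunct2, THEN conjunct2, THEN conjunct2, THEN conjunct2, THEN conjunct1]
lemmas R31 = mcm_raw[THEN conjunct2, THEN conjunct2, THEN conjunct2, THEN conjunct2, THEN conjunct2, THEN conjunct2, THEN conjunct2, THEN conjunct2, THEN conjunct2, THEN conjunct2, THEN conjunct2, THEN conjunct2, THEN conjunct2, THEN conjunct2, THEN conjunct2, THEN conjunct2, THEN conjunct2, THEN conjunct2, THEN conjunct2, THEN conjunct2, THEN conjunct2, THEN conjunct2, THEN conjunct2, THEN conjunct2, THEN conjunct2, THEN conjunct2, THEN conjunct2, THEN conjunct2, THEN conjunct2, THEN conjunct2, THEN conjunct1]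
lemmas R32 = mcm_raw[THEN conjunct2, THEN conjunct2, THEN conjunct2, THEN conjunct2, THEN conjunct2, THEN conjunct2, THEN conjunct2, THEN conjunct2, THEN conjunct2, THEN conjunct2, THEN conjunct2, THEN conjunct2, THEN conjunct2, THEN conjunct2, THEN conjunct2, THEN conjunct2, THEN conjunct2, THEN conjunct2, THEN conjunct2, THEN conjunct2, THEN conjunct2, THEN conjunct2, THEN conjunct2, THEN conjunct2, THEN conjunct2, THEN conjunct2, THEN conjunct2, THEN conjunct2, THEN conjunct2, THEN conjunct2, THEN conjunct2, THEN conjunct1]
lemmas R33 = mcm_raw[THEN conjunct2, THEN conjunct2, THEN conjunct2, THEN conjunct2, THEN conjunct2, THEN conjunct2, THEN conjunct2, THEN conjunct2, THEN conjunct2, THEN conjunct2, THEN conjunct2, THEN conjunct2, THEN conjunct2, THEN conjunct2, THEN conjunct2, THEN conjunct2, THEN conjunct2, THEN conjunct2, THEN conjunct2, THEN conjunct2, THEN conjunct2, THEN conjunct2, THEN conjunct2, THEN conjunct2, THEN conjunct2, THEN conjunct2, THEN conjunct2, THEN conjunct2, THEN conjunct2, THEN conjunct2, THEN conjunct2, THEN conjunct2, THEN conjunct1]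
lemmas R34 = mcm_raw[THEN conjunct2, THEN conjunct2, THEN conjunct2, THEN conjunct2, THEN conjunct2, THEN conjunct2, THEN conjunct2, THEN conjunct2, THEN conjunct2, THEN conjunct2, THEN conjunct2, THEN conjunct2, THEN conjunct2, THEN conjunct2, THEN conjunct2, THEN conjunct2, THEN conjunct2, THEN conjunct2, THEN conjunct2, THEN conjunct2, THEN conjunct2, THEN conjunct2, THEN conjunct2, THEN conjunct2, THEN conjunct2, THEN conjunct2, THEN conjunct2, THEN conjunct2, THEN conjunct2, THEN conjunct2, THEN conjunct2, THEN conjunct2, THEN conjunct2, THEN conjunct1]
lemmas R35 = mcm_raw[THEN conjunct2, THEN conjunct2, THEN conjunct2, THEN conjunct2, THEN conjunct2, THEN conjunct2, THEN conjunct2, THEN conjunct2, THEN conjunct2, THEN conjunct2, THEN conjunct2, THEN conjunct2, THEN conjunct2, THEN conjunct2, THEN conjunct2, THEN conjunct2, THEN conjunct2, THEN conjunct2, THEN conjunct2, THEN conjunct2, THEN conjunct2, THEN conjunct2, THEN conjunct2, THEN conjunct2, THEN conjunct2, THEN conjunct2, THEN conjunct2, THEN conjunct2, THEN conjunct2, THEN conjunct2, THEN conjunct2, THEN conjunct2, THEN conjunct2, THEN conjunct2]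

definition bb where "bb f = (if Ar f then bngm M f else z (b (sr f)) (b (tg f)))"
lemma bb_ty[simp]: "Ar (bb f)" "sr (bb f) = b (sr f)" "tg (bb f) = b (tg f)"
  using R1 by (auto simp: bb_def hom_iff)
lemma bngm_bb: "Ar f \<Longrightarrow> bngm M f = bb f" by (simp add: bb_def)

lemma bb_id[simp]: "bb (i A) = i (b A)"
  using R2 by (simp add: bb_def)
lemma bb_cc: "Ar f \<Longrightarrow> Ar g \<Longrightarrow> tg f = sr g \<Longrightarrow> bb (f \<cdot> g) = bb f \<cdot> bb g"
  using R3 by (simp add: hom_iff bngm_bb cc_eq[symmetric])

lemma d_ty[simp]: "Ar (d A)" "sr (d A) = b A" "tg (d A) = b (b A)"
  "Ar (eps A)" "sr (eps A) = b A" "tg (eps A) = A"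
  using R4 by (auto simp: hom_iff)
lemma d_nat: "Ar f \<Longrightarrow> tg f = B \<Longrightarrow> bb f \<cdot> d B = d (sr f) \<cdot> bb (bb f)"
  using R5 by (simp add: hom_iff bngm_bb cmp_cc) metis
lemma ep_nat: "Ar f \<Longrightarrow> tg f = B \<Longrightarrow> bb f \<cdot> eps B = eps (sr f) \<cdot> f"
  using R6 by (simp add: hom_iff bngm_bb cmp_cc) metis
lemma d_d: "d A \<cdot> d (b A) = d A \<cdot> bb (d A)"
  using R7 by (simp add: bngm_bb cmp_cc)
lemma d_ep[simp]: "d A \<cdot> eps (b A) = i (b A)"
  using R8 by (simp add: bngm_bb cmp_cc)
lemma d_bep[simp]: "d A \<cdot> bb (eps A) = i (b A)"
  using R9 by (simp add: bngm_bb cmp_cc)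

lemma m_ty[simp]: "Ar (m A B)" "sr (m A B) = b A \<odot> b B" "tg (m A B) = b (A \<odot> B)"
  "Ar mK" "sr mK = K" "tg mK = b K"
  using R10 R11 by (auto simp: hom_iff)
lemma m_nat: "Ar f \<Longrightarrow> Ar g \<Longrightarrow> tg f = B \<Longrightarrow> tg g = D \<Longrightarrow> (bb f \<otimes> bb g) \<cdot> m B D = m (sr f) (sr g) \<cdot> bb (f \<otimes> g)"
  using R12 by (simp add: hom_iff bngm_bb cmp_cc tnsm_tt) metis
lemma m_assoc: "(i (b A) \<otimes> m B C) \<cdot> (m A (B\<odot>C) \<cdot> bb (a A B C)) = a (b A) (b B) (b C) \<cdot> ((m A B \<otimes> i (b C)) \<cdot> m (A\<odot>B) C)"
  using R13 by (simp add: bngm_bb cmp_cc tnsm_tt)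
lemma m_lu: "(mK \<otimes> i (b A)) \<cdot> (m K A \<cdot> bb (l A)) = l (b A)"
  using R14 by (simp add: bngm_bb cmp_cc tnsm_tt)
lemma m_ru: "(i (b A) \<otimes> mK) \<cdot> (m A K \<cdot> bb (r A)) = r (b A)"
  using R15 by (simp add: bngm_bb cmp_cc tnsm_tt)
lemma m_sym: "s (b A) (b B) \<cdot> m B A = m A B \<cdot> bb (s A B)"
  using R16 by (simp add: bngm_bb cmp_cc tnsm_tt)
lemma d_mon: "m A B \<cdot> d (A\<odot>B) = (d A \<otimes> d B) \<cdot> (m (b A) (b B) \<cdot> bb (m A B))"
  using R17 by (simp add: bngm_bb cmp_cc tnsm_tt)
lemma d_monK: "mK \<cdot> d K = mK \<cdot> bb mK"
  using R18 by (simp add: bngm_bb cmp_cc tnsm_tt)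
lemma ep_mon: "m A B \<cdot> eps (A\<odot>B) = eps A \<otimes> eps B"
  using R19 by (simp add: bngm_bb cmp_cc tnsm_tt)
lemma ep_monK[simp]: "mK \<cdot> eps K = i K"
  using R20 by (simp add: bngm_bb cmp_cc tnsm_tt)

lemma dD_ty[simp]: "Ar (dD A)" "sr (dD A) = b A" "tg (dD A) = b A \<odot> b A"
  "Ar (e A)" "sr (e A) = b A" "tg (e A) = K"
  using R21 by (auto simp: hom_iff)
lemma dD_nat: "Ar f \<Longrightarrow> tg f = B \<Longrightarrow> bb f \<cdot> dD B = dD (sr f) \<cdot> (bb f \<otimes> bb f)"
  using R22 by (simp add: hom_iff bngm_bb cmp_cc tnsm_tt) metis
lemma e_nat: "Ar f \<Longrightarrow> tg f = B \<Longrightarrow> bb f \<cdot> e B = e (sr f)"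
  using R23 by (simp add: hom_iff bngm_bb cmp_cc tnsm_tt) metis
lemma coassoc: "dD A \<cdot> ((i (b A) \<otimes> dD A) \<cdot> a (b A) (b A) (b A)) = dD A \<cdot> (dD A \<otimes> i (b A))"
  using R24 by (simp add: bngm_bb cmp_cc tnsm_tt)
lemma counit_l[simp]: "dD A \<cdot> ((e A \<otimes> i (b A)) \<cdot> l (b A)) = i (b A)"
  using R25 by (simp add: bngm_bb cmp_cc tnsm_tt)
lemma counit_r[simp]: "dD A \<cdot> ((i (b A) \<otimes> e A) \<cdot> r (b A)) = i (b A)"
  using R26 by (simp add: bngm_bb cmp_cc tnsm_tt)
lemma cocomm[simp]: "dD A \<cdot> s (b A) (b A) = dD A"
  using R27 by (simp add: bngm_bb cmp_cc tnsm_tt)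
lemma d_dD: "d A \<cdot> dD (b A) = dD A \<cdot> (d A \<otimes> d A)"
  using R28 by (simp add: bngm_bb cmp_cc tnsm_tt)
lemma d_e[simp]: "d A \<cdot> e (b A) = e A"
  using R29 by (simp add: bngm_bb cmp_cc tnsm_tt)
lemma dD_mon: "m A B \<cdot> dD (A\<odot>B) = (dD A \<otimes> dD B) \<cdot> (ta (b A) (b A) (b B) (b B) \<cdot> (m A B \<otimes> m A B))"
  using R30 by (simp add: bngm_bb cmp_cc tnsm_tt)
lemma dD_monK: "mK \<cdot> dD K = li K \<cdot> (mK \<otimes> mK)"
  using R31 by (simp add: bngm_bb cmp_cc tnsm_tt)
lemma e_mon: "m A B \<cdot> e (A\<odot>B) = (e A \<otimes> e B) \<cdot> l K"
  using R32 by (simp add: bngm_bb cmp_cc tnsm_tt)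
lemma e_monK[simp]: "mK \<cdot> e K = i K"
  using R33 by (simp add: bngm_bb cmp_cc tnsm_tt)
lemma dD_coalg: "dD A \<cdot> ((d A \<otimes> d A) \<cdot> m (b A) (b A)) = d A \<cdot> bb (dD A)"
  using R34 by (simp add: bngm_bb cmp_cc tnsm_tt)
lemma e_coalg: "e A \<cdot> mK = d A \<cdot> bb (e A)"
  using R35 by (simp add: bngm_bb cmp_cc tnsm_tt)

end

context ASMC begin
lemma CT1: "Ar f \<Longrightarrow> Ar g \<Longrightarrow> Ar h \<Longrightarrow> sr f = X \<Longrightarrow> sr g = Y \<Longrightarrow> sr h = Z \<Longrightarrow> tg f = A \<Longrightarrow> tg g = K \<Longrightarrow> tg h = K \<Longrightarrow>
  ai X Y Z \<cdot> ((f \<otimes> ((g \<otimes> h) \<cdot> l K)) \<cdot> r A) = (((f \<otimes> g) \<cdot> r A) \<otimes> h) \<cdot> r A"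
proof -
  assume H: "Ar f" "Ar g" "Ar h" "sr f = X" "sr g = Y" "sr h = Z" "tg f = A" "tg g = K" "tg h = K"
  have "ai X Y Z \<cdot> ((f \<otimes> ((g \<otimes> h) \<cdot> l K)) \<cdot> r A) = ai X Y Z \<cdot> ((f \<otimes> (g \<otimes> h)) \<cdot> ((i A \<otimes> l K) \<cdot> r A))"
    using H by simp
  also have "\<dots> = ((f \<otimes> g) \<otimes> h) \<cdot> (ai A K K \<cdot> ((i A \<otimes> l K) \<cdot> r A))"
    using H by (simp add: ctx2[OF ai_nat'] del: merge merge2)
  also have "\<dots> = ((f \<otimes> g) \<otimes> h) \<cdot> ((r A \<otimes> i K) \<cdot> r A)"
    by (simp add: ctx2[OF tri_i] del: merge merge2)
  also have "\<dots> = (((f \<otimes> g) \<cdot> r A) \<otimes> h) \<cdot> r A"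
    using H by simp
  finally show ?thesis .
qed
lemma CT2: "Ar f \<Longrightarrow> Ar g \<Longrightarrow> Ar h \<Longrightarrow> sr f = X \<Longrightarrow> sr g = Y \<Longrightarrow> sr h = Z \<Longrightarrow> tg f = K \<Longrightarrow> tg g = A \<Longrightarrow> tg h = K \<Longrightarrow>
  ai X Y Z \<cdot> ((f \<otimes> ((g \<otimes> h) \<cdot> r A)) \<cdot> l A) = (((f \<otimes> g) \<cdot> l A) \<otimes> h) \<cdot> r A"
proof -
  assume H: "Ar f" "Ar g" "Ar h" "sr f = X" "sr g = Y" "sr h = Z" "tg f = K" "tg g = A" "tg h = K"
  have "ai X Y Z \<cdot> ((f \<otimes> ((g \<otimes> h) \<cdot> r A)) \<cdot> l A) = ai X Y Z \<cdot> ((f \<otimes> (g \<otimes> h)) \<cdot> ((i K \<otimes> r A) \<cdot> l A))"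
    using H by simp
  also have "\<dots> = ((f \<otimes> g) \<otimes> h) \<cdot> (ai K A K \<cdot> (l (A \<odot> K) \<cdot> r A))"
    using H by (simp add: ctx2[OF ai_nat'] l_nat del: merge merge2)
  also have "\<dots> = ((f \<otimes> g) \<otimes> h) \<cdot> ((l A \<otimes> i K) \<cdot> r A)"
    by (simp add: K1i2 del: merge merge2)
  also have "\<dots> = (((f \<otimes> g) \<cdot> l A) \<otimes> h) \<cdot> r A"
    using H by simp
  finally show ?thesis .
qed
lemma CT3: "Ar f \<Longrightarrow> Ar g \<Longrightarrow> Ar h \<Longrightarrow> sr f = X \<Longrightarrow> sr g = Y \<Longrightarrow> sr h = Z \<Longrightarrow> tg f = K \<Longrightarrow> tg g = K \<Longrightarrow> tg h = A \<Longrightarrow>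
  ai X Y Z \<cdot> ((f \<otimes> ((g \<otimes> h) \<cdot> l A)) \<cdot> l A) = (((f \<otimes> g) \<cdot> l K) \<otimes> h) \<cdot> l A"
proof -
  assume H: "Ar f" "Ar g" "Ar h" "sr f = X" "sr g = Y" "sr h = Z" "tg f = K" "tg g = K" "tg h = A"
  have "ai X Y Z \<cdot> ((f \<otimes> ((g \<otimes> h) \<cdot> l A)) \<cdot> l A) = ai X Y Z \<cdot> ((f \<otimes> (g \<otimes> h)) \<cdot> ((i K \<otimes> l A) \<cdot> l A))"
    using H by simp
  also have "\<dots> = ((f \<otimes> g) \<otimes> h) \<cdot> (ai K K A \<cdot> (l (K \<odot> A) \<cdot> l A))"
    using H by (simp add: ctx2[OF ai_nat'] l_nat del: merge merge2)
  also have "\<dots> = ((f \<otimes> g) \<otimes> h) \<cdot> ((l K \<otimes> i A) \<cdot> l A)"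
    by (simp add: K1i2 del: merge merge2)
  also have "\<dots> = (((f \<otimes> g) \<cdot> l K) \<otimes> h) \<cdot> l A"
    using H by simp
  finally show ?thesis .
qed
end

context MCM begin

definition phi where "phi A = ((eps A \<otimes> e A) \<cdot> r A) \<oplus> ((e A \<otimes> eps A) \<cdot> l A)"
definition nab where "nab A = (d A \<otimes> d A) \<cdot> (m (b A) (b A) \<cdot> bb (phi A))"
definition u where "u A = mK \<cdot> bb (z K A)"

lemma phi_ty[simp]: "Ar (phi A)" "sr (phi A) = b A \<odot> b A" "tg (phi A) = A"
  by (simp_all add: phi_def)
lemma nab_ty[simp]: "Ar (nab A)" "sr (nab A) = b A \<odot> b A" "tg (nab A) = b A"
  by (simp_all add: nab_def)
lemma u_ty[simp]: "Ar (u A)" "sr (u A) = K" "tg (u A) = b A"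
  by (simp_all add: u_def)

lemma nabla_eq: "nabla S M A = nab A"
  by (simp add: nabla_def nab_def phi_def cmp_cc tnsm_tt pls_pp bngm_bb)
lemma uu_eq: "uu S M A = u A"
  by (simp add: uu_def u_def cmp_cc bngm_bb)

lemma u_e[simp]: "u A \<cdot> e A = i K"
  by (simp add: u_def e_nat)
lemma u_e2[simp]: "Ar h \<Longrightarrow> sr h = K \<Longrightarrow> u A \<cdot> (e A \<cdot> h) = h"
  by (simp add: ctx2[OF u_e])
lemma u_eps: "u A \<cdot> eps A = z K A"
  by (simp add: u_def ep_nat)
lemma u_d: "u A \<cdot> d A = mK \<cdot> bb (u A)"
  by (simp add: u_def ctx2[OF d_nat] d_nat d_monK ctx2[OF d_monK] bb_cc)
lemma u_dD: "u A \<cdot> dD A = li K \<cdot> (u A \<otimes> u A)"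
  by (simp add: u_def dD_nat ctx2[OF dD_nat] ctx2[OF dD_monK])
lemma nab_eps: "nab A \<cdot> eps A = phi A"
  by (simp add: nab_def ep_nat ctx2[OF ep_mon] ep_mon)
lemma nab_e: "nab A \<cdot> e A = (e A \<otimes> e A) \<cdot> l K"
  by (simp add: nab_def e_nat ctx2[OF e_mon] e_mon)

lemma nab_d: "nab A \<cdot> d A = (d A \<otimes> d A) \<cdot> (m (b A) (b A) \<cdot> bb (nab A))"
proof -
  have "nab A \<cdot> d A = (d A \<otimes> d A) \<cdot> (m (b A) (b A) \<cdot> (d (b A \<odot> b A) \<cdot> bb (bb (phi A))))"
    by (simp add: nab_def d_nat)
  also have "\<dots> = (d A \<otimes> d A) \<cdot> ((d (b A) \<otimes> d (b A)) \<cdot> (m (b (b A)) (b (b A)) \<cdot> (bb (m (b A) (b A)) \<cdot> bb (bb (phi A)))))"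
    by (simp only: ctx2[OF d_mon] cassoc)
  also have "\<dots> = ((d A \<cdot> bb (d A)) \<otimes> (d A \<cdot> bb (d A))) \<cdot> (m (b (b A)) (b (b A)) \<cdot> (bb (m (b A) (b A)) \<cdot> bb (bb (phi A))))"
    by (simp add: d_d)
  also have "\<dots> = (d A \<otimes> d A) \<cdot> ((bb (d A) \<otimes> bb (d A)) \<cdot> (m (b (b A)) (b (b A)) \<cdot> (bb (m (b A) (b A)) \<cdot> bb (bb (phi A)))))"
    by simp
  also have "\<dots> = (d A \<otimes> d A) \<cdot> (m (b A) (b A) \<cdot> (bb (d A \<otimes> d A) \<cdot> (bb (m (b A) (b A)) \<cdot> bb (bb (phi A)))))"
    by (simp only: ctx2[OF m_nat] d_ty cassoc)
  also have "\<dots> = (d A \<otimes> d A) \<cdot> (m (b A) (b A) \<cdot> bb (nab A))"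
    by (simp add: nab_def bb_cc)
  finally show ?thesis .
qed


lemma uphi_l: "(u A \<otimes> i (b A)) \<cdot> phi A = l (b A) \<cdot> eps A"
  by (simp add: phi_def cc_pp_r u_eps l_nat z_pp)
lemma uphi_r: "(i (b A) \<otimes> u A) \<cdot> phi A = r (b A) \<cdot> eps A"
  by (simp add: phi_def cc_pp_r u_eps r_nat pp_z)

lemma m_lu2: "Ar x \<Longrightarrow> sr x = b A \<Longrightarrow> (mK \<otimes> i (b A)) \<cdot> (m K A \<cdot> (bb (l A) \<cdot> x)) = l (b A) \<cdot> x"
  by (simp add: ctx3[OF m_lu])
lemma m_ru2: "Ar x \<Longrightarrow> sr x = b A \<Longrightarrow> (i (b A) \<otimes> mK) \<cdot> (m A K \<cdot> (bb (r A) \<cdot> x)) = r (b A) \<cdot> x"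
  by (simp add: ctx3[OF m_ru])

lemma unit_l: "(u A \<otimes> i (b A)) \<cdot> nab A = l (b A)"
proof -
  have "(u A \<otimes> i (b A)) \<cdot> nab A = ((mK \<cdot> bb (u A)) \<otimes> d A) \<cdot> (m (b A) (b A) \<cdot> bb (phi A))"
    by (simp add: nab_def u_d)
  also have "\<dots> = (mK \<otimes> d A) \<cdot> ((bb (u A) \<otimes> bb (i (b A))) \<cdot> (m (b A) (b A) \<cdot> bb (phi A)))"
    by simp
  also have "\<dots> = (mK \<otimes> d A) \<cdot> (m K (b A) \<cdot> (bb (u A \<otimes> i (b A)) \<cdot> bb (phi A)))"
    by (simp only: ctx2[OF m_nat] u_ty id_ty cassoc)
  also have "\<dots> = (mK \<otimes> d A) \<cdot> (m K (b A) \<cdot> (bb (l (b A)) \<cdot> bb (eps A)))"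
    by (simp add: bb_cc[symmetric] uphi_l)
  also have "\<dots> = (i K \<otimes> d A) \<cdot> ((mK \<otimes> i (b (b A))) \<cdot> (m K (b A) \<cdot> (bb (l (b A)) \<cdot> bb (eps A))))"
    by simp
  also have "\<dots> = l (b A)"
    by (simp add: m_lu2 ctx2[OF l_nat] del: merge merge2)
  finally show ?thesis .
qed

lemma unit_r: "(i (b A) \<otimes> u A) \<cdot> nab A = r (b A)"
proof -
  have "(i (b A) \<otimes> u A) \<cdot> nab A = (d A \<otimes> (mK \<cdot> bb (u A))) \<cdot> (m (b A) (b A) \<cdot> bb (phi A))"
    by (simp add: nab_def u_d)
  also have "\<dots> = (d A \<otimes> mK) \<cdot> ((bb (i (b A)) \<otimes> bb (u A)) \<cdot> (m (b A) (b A) \<cdot> bb (phi A)))"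
    by simp
  also have "\<dots> = (d A \<otimes> mK) \<cdot> (m (b A) K \<cdot> (bb (i (b A) \<otimes> u A) \<cdot> bb (phi A)))"
    by (simp only: ctx2[OF m_nat] u_ty id_ty cassoc)
  also have "\<dots> = (d A \<otimes> mK) \<cdot> (m (b A) K \<cdot> (bb (r (b A)) \<cdot> bb (eps A)))"
    by (simp add: bb_cc[symmetric] uphi_r)
  also have "\<dots> = (d A \<otimes> i K) \<cdot> ((i (b (b A)) \<otimes> mK) \<cdot> (m (b A) K \<cdot> (bb (r (b A)) \<cdot> bb (eps A))))"
    by simp
  also have "\<dots> = r (b A)"
    by (simp add: m_ru2 ctx2[OF r_nat] del: merge merge2)
  finally show ?thesis .
qed


lemma PHIA: "ai (b A) (b A) (b A) \<cdot> ((i (b A) \<otimes> nab A) \<cdot> phi A) = (nab A \<otimes> i (b A)) \<cdot> phi A"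
proof -
  let ?T1 = "(((eps A \<otimes> e A) \<cdot> r A) \<otimes> e A) \<cdot> r A"
  let ?T2 = "(((e A \<otimes> eps A) \<cdot> l A) \<otimes> e A) \<cdot> r A"
  let ?T3 = "(((e A \<otimes> e A) \<cdot> l K) \<otimes> eps A) \<cdot> l A"
  have L: "ai (b A) (b A) (b A) \<cdot> ((i (b A) \<otimes> nab A) \<cdot> phi A) = ?T1 \<oplus> (?T2 \<oplus> ?T3)"
    by (simp add: phi_def cc_pp_r cc_pp_l tt_pp_l tt_pp_r nab_eps nab_e CT1 CT2 CT3)
  have R: "(nab A \<otimes> i (b A)) \<cdot> phi A = (?T1 \<oplus> ?T2) \<oplus> ?T3"
    by (simp add: phi_def cc_pp_r cc_pp_l tt_pp_l tt_pp_r nab_eps nab_e)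
  show ?thesis using L R by (simp add: pp_assoc)
qed


lemma m_assoc': "Ar x \<Longrightarrow> sr x = b (A\<odot>(B\<odot>C)) \<Longrightarrow> (i (b A) \<otimes> m B C) \<cdot> (m A (B\<odot>C) \<cdot> x) = a (b A) (b B) (b C) \<cdot> ((m A B \<otimes> i (b C)) \<cdot> (m (A\<odot>B) C \<cdot> (bb (ai A B C) \<cdot> x)))"
proof -
  assume H: "Ar x" "sr x = b (A\<odot>(B\<odot>C))"
  have "(i (b A) \<otimes> m B C) \<cdot> (m A (B\<odot>C) \<cdot> x) = (i (b A) \<otimes> m B C) \<cdot> (m A (B\<odot>C) \<cdot> (bb (a A B C \<cdot> ai A B C) \<cdot> x))"
    using H by (simp del: tm_id)
  also have "\<dots> = (i (b A) \<otimes> m B C) \<cdot> (m A (B\<odot>C) \<cdot> (bb (a A B C) \<cdot> (bb (ai A B C) \<cdot> x)))"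
    by (simp only: bb_cc a_ty cassoc)
  also have "\<dots> = a (b A) (b B) (b C) \<cdot> ((m A B \<otimes> i (b C)) \<cdot> (m (A\<odot>B) C \<cdot> (bb (ai A B C) \<cdot> x)))"
    by (simp only: ctx3[OF m_assoc] cassoc)
  finally show ?thesis .
qed

lemma nab_assoc: "((i (b A) \<otimes> nab A) \<cdot> nab A) = (a (b A) (b A) (b A) \<cdot> ((nab A \<otimes> i (b A)) \<cdot> nab A))"
proof -
  have "((i (b A) \<otimes> nab A) \<cdot> nab A) = ((d A \<otimes> (nab A \<cdot> d A)) \<cdot> (m (b A) (b A) \<cdot> bb (phi A)))" by (simp add: nab_def)
  also have "\<dots> = ((d A \<otimes> ((d A \<otimes> d A) \<cdot> (m (b A) (b A) \<cdot> bb (nab A)))) \<cdot> (m (b A) (b A) \<cdot> bb (phi A)))" by (simp only: nab_d)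
  also have "\<dots> = ((d A \<otimes> ((d A \<otimes> d A) \<cdot> m (b A) (b A))) \<cdot> ((bb (i (b A)) \<otimes> bb (nab A)) \<cdot> (m (b A) (b A) \<cdot> bb (phi A))))" by simp
  also have "\<dots> = ((d A \<otimes> ((d A \<otimes> d A) \<cdot> m (b A) (b A))) \<cdot> (m (b A) ((b A)\<odot>(b A)) \<cdot> (bb ((i (b A) \<otimes> nab A)) \<cdot> bb (phi A))))" by (simp only: ctx2[OF m_nat] id_ty nab_ty cassoc)
  also have "\<dots> = ((d A \<otimes> (d A \<otimes> d A)) \<cdot> ((i (b (b A)) \<otimes> m (b A) (b A)) \<cdot> (m (b A) ((b A)\<odot>(b A)) \<cdot> bb (((i (b A) \<otimes> nab A) \<cdot> phi A)))))" by (simp add: bb_cc)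
  also have "\<dots> = ((d A \<otimes> (d A \<otimes> d A)) \<cdot> (a (b (b A)) (b (b A)) (b (b A)) \<cdot> ((m (b A) (b A) \<otimes> i (b (b A))) \<cdot> (m ((b A)\<odot>(b A)) (b A) \<cdot> bb ((ai (b A) (b A) (b A) \<cdot> ((i (b A) \<otimes> nab A) \<cdot> phi A)))))))" by (simp add: m_assoc' bb_cc del: merge merge2)
  also have "\<dots> = ((d A \<otimes> (d A \<otimes> d A)) \<cdot> (a (b (b A)) (b (b A)) (b (b A)) \<cdot> ((m (b A) (b A) \<otimes> i (b (b A))) \<cdot> (m ((b A)\<odot>(b A)) (b A) \<cdot> bb (((nab A \<otimes> i (b A)) \<cdot> phi A))))))" by (simp only: PHIA)
  also have "\<dots> = (a (b A) (b A) (b A) \<cdot> (((d A \<otimes> d A) \<otimes> d A) \<cdot> ((m (b A) (b A) \<otimes> i (b (b A))) \<cdot> (m ((b A)\<odot>(b A)) (b A) \<cdot> bb (((nab A \<otimes> i (b A)) \<cdot> phi A))))))" by (simp add: a_nat' ctx2[OF a_nat'] del: merge merge2)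
  also have "\<dots> = (a (b A) (b A) (b A) \<cdot> ((((d A \<otimes> d A) \<cdot> m (b A) (b A)) \<otimes> d A) \<cdot> (m ((b A)\<odot>(b A)) (b A) \<cdot> (bb ((nab A \<otimes> i (b A))) \<cdot> bb (phi A)))))" by (simp add: bb_cc)
  also have "\<dots> = (a (b A) (b A) (b A) \<cdot> ((((d A \<otimes> d A) \<cdot> m (b A) (b A)) \<otimes> d A) \<cdot> ((bb (nab A) \<otimes> bb (i (b A))) \<cdot> (m (b A) (b A) \<cdot> bb (phi A)))))" by (simp only: ctx2[OF m_nat] id_ty nab_ty cassoc)
  also have "\<dots> = (a (b A) (b A) (b A) \<cdot> ((((d A \<otimes> d A) \<cdot> (m (b A) (b A) \<cdot> bb (nab A))) \<otimes> d A) \<cdot> (m (b A) (b A) \<cdot> bb (phi A))))" by simp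
  also have "\<dots> = (a (b A) (b A) (b A) \<cdot> (((nab A \<cdot> d A) \<otimes> d A) \<cdot> (m (b A) (b A) \<cdot> bb (phi A))))" by (simp only: nab_d)
  also have "\<dots> = (a (b A) (b A) (b A) \<cdot> ((nab A \<otimes> i (b A)) \<cdot> nab A))" by (simp add: nab_def)
  finally show ?thesis .
qed


lemma nab_dD: "nab A \<cdot> dD A = (dD A \<otimes> dD A) \<cdot> (ta (b A) (b A) (b A) (b A) \<cdot> (nab A \<otimes> nab A))"
proof -
  let ?X = "b A" and ?Y = "b (b A)"
  have "nab A \<cdot> dD A = ((dD A \<cdot> (d A \<otimes> d A)) \<otimes> (dD A \<cdot> (d A \<otimes> d A))) \<cdot> (ta ?Y ?Y ?Y ?Y \<cdot> ((m ?X ?X \<cdot> bb (phi A)) \<otimes> (m ?X ?X \<cdot> bb (phi A))))"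
    by (simp add: nab_def dD_nat ctx2[OF dD_mon] d_dD)
  also have "\<dots> = (dD A \<otimes> dD A) \<cdot> (((d A \<otimes> d A) \<otimes> (d A \<otimes> d A)) \<cdot> (ta ?Y ?Y ?Y ?Y \<cdot> ((m ?X ?X \<cdot> bb (phi A)) \<otimes> (m ?X ?X \<cdot> bb (phi A)))))"
    by simp
  also have "\<dots> = (dD A \<otimes> dD A) \<cdot> (ta ?X ?X ?X ?X \<cdot> (((d A \<otimes> d A) \<otimes> (d A \<otimes> d A)) \<cdot> ((m ?X ?X \<cdot> bb (phi A)) \<otimes> (m ?X ?X \<cdot> bb (phi A)))))"
    by (simp add: ctx2[OF ta_nat] del: merge merge2)
  also have "\<dots> = (dD A \<otimes> dD A) \<cdot> (ta ?X ?X ?X ?X \<cdot> (nab A \<otimes> nab A))"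
    by (simp add: nab_def)
  finally show ?thesis .
qed


lemma m_nat': "Ar f \<Longrightarrow> Ar g \<Longrightarrow> sr f = A \<Longrightarrow> sr g = C \<Longrightarrow> m A C \<cdot> bb (f \<otimes> g) = (bb f \<otimes> bb g) \<cdot> m (tg f) (tg g)"
  using m_nat by metis
lemma MAi0: "(m A B \<otimes> i (b C)) \<cdot> (m (A\<odot>B) C \<cdot> bb (ai A B C)) = ai (b A) (b B) (b C) \<cdot> ((i (b A) \<otimes> m B C) \<cdot> m A (B\<odot>C))"
proof -
  have "ai (b A) (b B) (b C) \<cdot> ((i (b A) \<otimes> m B C) \<cdot> m A (B\<odot>C)) = ai (b A) (b B) (b C) \<cdot> ((i (b A) \<otimes> m B C) \<cdot> (m A (B\<odot>C) \<cdot> i (b (A\<odot>(B\<odot>C)))))"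
    by simp
  also have "\<dots> = (m A B \<otimes> i (b C)) \<cdot> (m (A\<odot>B) C \<cdot> bb (ai A B C))"
    by (simp only: m_assoc' id_ty a_inv2 cassoc) simp
  finally show ?thesis by simp
qed
lemma MAi: "(m A B \<otimes> i (b C)) \<cdot> (m (A\<odot>B) C \<cdot> (bb (ai A B C) \<cdot> x)) = ai (b A) (b B) (b C) \<cdot> ((i (b A) \<otimes> m B C) \<cdot> (m A (B\<odot>C) \<cdot> x))"
  by (simp only: ctx3[OF MAi0] cassoc)

lemma Mgm: "gm (b A) (b B) (b C) \<cdot> ((i (b B) \<otimes> m A C) \<cdot> m B (A\<odot>C)) = (i (b A) \<otimes> m B C) \<cdot> (m A (B\<odot>C) \<cdot> bb (gm A B C))"
proof -
  have "(i (b A) \<otimes> m B C) \<cdot> (m A (B\<odot>C) \<cdot> bb (gm A B C)) = (i (b A) \<otimes> m B C) \<cdot> (m A (B\<odot>C) \<cdot> (bb (a A B C) \<cdot> (bb (s A B \<otimes> i C) \<cdot> bb (ai B A C))))"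
    by (simp add: gm_def bb_cc)
  also have "\<dots> = a (b A) (b B) (b C) \<cdot> ((m A B \<otimes> i (b C)) \<cdot> (m (A\<odot>B) C \<cdot> (bb (s A B \<otimes> i C) \<cdot> bb (ai B A C))))"
    by (simp only: ctx3[OF m_assoc] cassoc)
  also have "\<dots> = a (b A) (b B) (b C) \<cdot> ((m A B \<otimes> i (b C)) \<cdot> ((bb (s A B) \<otimes> bb (i C)) \<cdot> (m (B\<odot>A) C \<cdot> bb (ai B A C))))"
    by (simp only: ctx2[OF m_nat'] s_ty id_ty cassoc)
  also have "\<dots> = a (b A) (b B) (b C) \<cdot> ((s (b A) (b B) \<otimes> i (b C)) \<cdot> ((m B A \<otimes> i (b C)) \<cdot> (m (B\<odot>A) C \<cdot> bb (ai B A C))))"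
    by (simp add: m_sym[symmetric])
  also have "\<dots> = a (b A) (b B) (b C) \<cdot> ((s (b A) (b B) \<otimes> i (b C)) \<cdot> (ai (b B) (b A) (b C) \<cdot> ((i (b B) \<otimes> m A C) \<cdot> m B (A\<odot>C))))"
    by (simp only: MAi0)
  also have "\<dots> = gm (b A) (b B) (b C) \<cdot> ((i (b B) \<otimes> m A C) \<cdot> m B (A\<odot>C))"
    by (simp add: gm_def)
  finally show ?thesis by simp
qed

lemma C9: "(ta (b A) (b B) (b C) (b D) \<cdot> ((m A C \<otimes> m B D) \<cdot> m (A\<odot>C) (B\<odot>D))) = ((m A B \<otimes> m C D) \<cdot> (m (A\<odot>B) (C\<odot>D) \<cdot> bb (ta A B C D)))"
proof -
  have "(ta (b A) (b B) (b C) (b D) \<cdot> ((m A C \<otimes> m B D) \<cdot> m (A\<odot>C) (B\<odot>D))) = (ai (b A) (b B) ((b C)\<odot>(b D)) \<cdot> ((i (b A) \<otimes> gm (b B) (b C) (b D)) \<cdot> (a (b A) (b C) ((b B)\<odot>(b D)) \<cdot> ((i ((b A)\<odot>(b C)) \<otimes> m B D) \<cdot> ((m A C \<otimes> i (b (B\<odot>D))) \<cdot> m (A\<odot>C) (B\<odot>D))))))" by (simp add: tau_eq)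
  also have "\<dots> = (ai (b A) (b B) ((b C)\<odot>(b D)) \<cdot> ((i (b A) \<otimes> gm (b B) (b C) (b D)) \<cdot> ((i (b A) \<otimes> (i (b C) \<otimes> m B D)) \<cdot> (a (b A) (b C) (b (B\<odot>D)) \<cdot> ((m A C \<otimes> i (b (B\<odot>D))) \<cdot> m (A\<odot>C) (B\<odot>D))))))" by (simp add: ctx2[OF a_nat_i] del: merge merge2)
  also have "\<dots> = (ai (b A) (b B) ((b C)\<odot>(b D)) \<cdot> ((i (b A) \<otimes> gm (b B) (b C) (b D)) \<cdot> ((i (b A) \<otimes> (i (b C) \<otimes> m B D)) \<cdot> ((i (b A) \<otimes> m C (B\<odot>D)) \<cdot> (m A (C\<odot>(B\<odot>D)) \<cdot> bb (a A C (B\<odot>D)))))))" by (simp only: m_assoc[symmetric])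
  also have "\<dots> = (ai (b A) (b B) ((b C)\<odot>(b D)) \<cdot> ((i (b A) \<otimes> (gm (b B) (b C) (b D) \<cdot> ((i (b C) \<otimes> m B D) \<cdot> m C (B\<odot>D)))) \<cdot> (m A (C\<odot>(B\<odot>D)) \<cdot> bb (a A C (B\<odot>D)))))" by simp
  also have "\<dots> = (ai (b A) (b B) ((b C)\<odot>(b D)) \<cdot> ((i (b A) \<otimes> ((i (b B) \<otimes> m C D) \<cdot> (m B (C\<odot>D) \<cdot> bb (gm B C D)))) \<cdot> (m A (C\<odot>(B\<odot>D)) \<cdot> bb (a A C (B\<odot>D)))))" by (simp only: Mgm)
  also have "\<dots> = (ai (b A) (b B) ((b C)\<odot>(b D)) \<cdot> ((i (b A) \<otimes> (i (b B) \<otimes> m C D)) \<cdot> ((i (b A) \<otimes> m B (C\<odot>D)) \<cdot> ((bb (i A) \<otimes> bb (gm B C D)) \<cdot> (m A (C\<odot>(B\<odot>D)) \<cdot> bb (a A C (B\<odot>D)))))))" by simp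
  also have "\<dots> = (ai (b A) (b B) ((b C)\<odot>(b D)) \<cdot> ((i (b A) \<otimes> (i (b B) \<otimes> m C D)) \<cdot> ((i (b A) \<otimes> m B (C\<odot>D)) \<cdot> (m A (B\<odot>(C\<odot>D)) \<cdot> (bb ((i A \<otimes> gm B C D)) \<cdot> bb (a A C (B\<odot>D)))))))" by (simp only: ctx2[OF m_nat] id_ty gm_ty cassoc)
  also have "\<dots> = ((i ((b A)\<odot>(b B)) \<otimes> m C D) \<cdot> (ai (b A) (b B) (b (C\<odot>D)) \<cdot> ((i (b A) \<otimes> m B (C\<odot>D)) \<cdot> (m A (B\<odot>(C\<odot>D)) \<cdot> (bb ((i A \<otimes> gm B C D)) \<cdot> bb (a A C (B\<odot>D)))))))" by (simp add: ctx2[OF ai_nat'] del: merge merge2)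
  also have "\<dots> = ((i ((b A)\<odot>(b B)) \<otimes> m C D) \<cdot> ((m A B \<otimes> i (b (C\<odot>D))) \<cdot> (m (A\<odot>B) (C\<odot>D) \<cdot> (bb (ai A B (C\<odot>D)) \<cdot> (bb ((i A \<otimes> gm B C D)) \<cdot> bb (a A C (B\<odot>D)))))))" by (simp only: MAi)
  also have "\<dots> = ((m A B \<otimes> m C D) \<cdot> (m (A\<odot>B) (C\<odot>D) \<cdot> bb (ta A B C D)))" by (simp add: tau_eq bb_cc)
  finally show ?thesis .
qed

end


context ASMC begin
lemma ta_nat_i12: "Ar h \<Longrightarrow> Ar k \<Longrightarrow> tg h = C' \<Longrightarrow> tg k = D' \<Longrightarrow>
  (i (A\<odot>B) \<otimes> (h \<otimes> k)) \<cdot> ta A B C' D' = ta A B (sr h) (sr k) \<cdot> ((i A \<otimes> h) \<otimes> (i B \<otimes> k))"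
  using ta_nat[of "i A" "i B" h k A B C' D'] by simp
lemma ta_nat_i34: "Ar f \<Longrightarrow> Ar g \<Longrightarrow> tg f = A' \<Longrightarrow> tg g = B' \<Longrightarrow>
  ((f \<otimes> g) \<otimes> i (C\<odot>D)) \<cdot> ta A' B' C D = ta (sr f) (sr g) C D \<cdot> ((f \<otimes> i C) \<otimes> (g \<otimes> i D))"
  using ta_nat[of f g "i C" "i D" A' B' C D] by simp
lemma ta_nat_i24: "Ar f \<Longrightarrow> sr f = A \<Longrightarrow>
  ta A B C D \<cdot> ((f \<otimes> i C) \<otimes> i (B\<odot>D)) = ((f \<otimes> i B) \<otimes> i (C\<odot>D)) \<cdot> ta (tg f) B C D"
  using ta_nat[of f "i B" "i C" "i D" "tg f" B C D] by simp
lemma ta_nat_v: "Ar g \<Longrightarrow> tg g = B' \<Longrightarrow>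
  ((i A \<otimes> g) \<otimes> i (C\<odot>D)) \<cdot> ta A B' C D = ta A (sr g) C D \<cdot> (i (A\<odot>C) \<otimes> (g \<otimes> i D))"
  using ta_nat[of "i A" g "i C" "i D" A B' C D] by simp
lemma li_nat: "Ar f \<Longrightarrow> tg f = B \<Longrightarrow> f \<cdot> li B = li (sr f) \<cdot> (i K \<otimes> f)"
proof -
  assume H: "Ar f" "tg f = B"
  have "li (sr f) \<cdot> (i K \<otimes> f) = li (sr f) \<cdot> ((i K \<otimes> f) \<cdot> (l B \<cdot> li B))" using H by simp
  also have "\<dots> = f \<cdot> li B" using H by (simp only: ctx2[OF l_nat]) simp
  finally show ?thesis by simp
qed
lemma taYK: "ta X X Y K = (s X X \<otimes> s Y K) \<cdot> (ta X X K Y \<cdot> s (X\<odot>K) (X\<odot>Y))"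
proof -
  have "(s X X \<otimes> s Y K) \<cdot> (ta X X K Y \<cdot> s (X\<odot>K) (X\<odot>Y)) = (s X X \<otimes> s Y K) \<cdot> ((s X X \<otimes> s K Y) \<cdot> ta X X Y K)"
    by (simp only: C4)
  also have "\<dots> = ta X X Y K" by simp
  finally show ?thesis by simp
qed
end

context MCM begin
lemma coassoc': "dD A \<cdot> ((dD A \<otimes> i (b A)) \<cdot> ai (b A) (b A) (b A)) = dD A \<cdot> (i (b A) \<otimes> dD A)"
proof -
  have "dD A \<cdot> (i (b A) \<otimes> dD A) = dD A \<cdot> ((i (b A) \<otimes> dD A) \<cdot> (a (b A) (b A) (b A) \<cdot> ai (b A) (b A) (b A)))"
    by simp
  also have "\<dots> = dD A \<cdot> ((dD A \<otimes> i (b A)) \<cdot> ai (b A) (b A) (b A))"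
    by (simp only: ctx3[OF coassoc] cassoc)
  finally show ?thesis by simp
qed
lemma m_lui: "li (b Y) \<cdot> ((mK \<otimes> i (b Y)) \<cdot> m K Y) = bb (li Y)"
proof -
  have "li (b Y) \<cdot> ((mK \<otimes> i (b Y)) \<cdot> m K Y) = li (b Y) \<cdot> ((mK \<otimes> i (b Y)) \<cdot> (m K Y \<cdot> (bb (l Y) \<cdot> bb (li Y))))"
    by (simp flip: bb_cc)
  also have "\<dots> = bb (li Y)" by (simp only: m_lu2 bb_ty l_ty) simp
  finally show ?thesis .
qed
end


context MCM begin
abbreviation MU where "MU A Y \<equiv> a (b A) (b A) Y \<cdot> (nab A \<otimes> i Y)"
abbreviation ETA where "ETA A Y \<equiv> li Y \<cdot> (u A \<otimes> i Y)"
abbreviation NN where "NN A Y Z \<equiv> (dD A \<otimes> i (Y\<odot>Z)) \<cdot> ta (b A) (b A) Y Z"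
abbreviation NK where "NK A \<equiv> r (b A) \<cdot> e A"
abbreviation LAM where "LAM A Y \<equiv> (d A \<otimes> i (b Y)) \<cdot> m (b A) Y"

lemma P5: "Ar f \<Longrightarrow> (i (b A) \<otimes> (i (b A) \<otimes> f)) \<cdot> MU A (tg f) = MU A (sr f) \<cdot> (i (b A) \<otimes> f)"
  by (simp add: ctx2[OF a_nat])
lemma P6: "Ar f \<Longrightarrow> f \<cdot> ETA A (tg f) = ETA A (sr f) \<cdot> (i (b A) \<otimes> f)"
  by (simp add: ctx2[OF li_nat])
lemma P7: "MU A (b A \<odot> Y) \<cdot> MU A Y = (i (b A) \<otimes> MU A Y) \<cdot> MU A Y"
proof -
  let ?X = "b A"
  have "MU A (?X \<odot> Y) \<cdot> MU A Y = a ?X ?X (?X\<odot>Y) \<cdot> (a (?X\<odot>?X) ?X Y \<cdot> (((nab A \<otimes> i ?X) \<otimes> i Y) \<cdot> (nab A \<otimes> i Y)))"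
    by (simp add: ctx2[OF a_nat_i3] del: merge merge2)
  also have "\<dots> = (i ?X \<otimes> a ?X ?X Y) \<cdot> (a ?X (?X\<odot>?X) Y \<cdot> ((a ?X ?X ?X \<otimes> i Y) \<cdot> (((nab A \<otimes> i ?X) \<otimes> i Y) \<cdot> (nab A \<otimes> i Y))))"
    by (simp add: ctx2[OF pentagon] del: merge merge2)
  also have "\<dots> = (i ?X \<otimes> a ?X ?X Y) \<cdot> (a ?X (?X\<odot>?X) Y \<cdot> (((i ?X \<otimes> nab A) \<cdot> nab A) \<otimes> i Y))"
    by (simp add: nab_assoc[symmetric])
  also have "\<dots> = (i ?X \<otimes> MU A Y) \<cdot> MU A Y"
    by (simp add: a_nat_m ctx2[OF a_nat_m])
  finally show ?thesis .
qed
lemma P8: "ETA A (b A \<odot> Y) \<cdot> MU A Y = i (b A \<odot> Y)"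
  by (simp add: ctx2[OF a_nat_i3] unit_l K1 del: tm_id)
lemma P9: "(i (b A) \<otimes> ETA A Y) \<cdot> MU A Y = i (b A \<odot> Y)"
proof -
  let ?X = "b A"
  have "(i ?X \<otimes> ETA A Y) \<cdot> MU A Y = (i ?X \<otimes> li Y) \<cdot> ((i ?X \<otimes> (u A \<otimes> i Y)) \<cdot> (a ?X ?X Y \<cdot> (nab A \<otimes> i Y)))"
    by simp
  also have "\<dots> = (i ?X \<otimes> li Y) \<cdot> (a ?X K Y \<cdot> (((i ?X \<otimes> u A) \<otimes> i Y) \<cdot> (nab A \<otimes> i Y)))"
    by (simp add: ctx2[OF a_nat] del: merge merge2)
  also have "\<dots> = i (?X \<odot> Y)"
    by (simp add: unit_r triangle)
  finally show ?thesis .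
qed
lemma P11: "Ar f \<Longrightarrow> Ar g \<Longrightarrow> (i (b A) \<otimes> (f \<otimes> g)) \<cdot> NN A (tg f) (tg g) = NN A (sr f) (sr g) \<cdot> ((i (b A) \<otimes> f) \<otimes> (i (b A) \<otimes> g))"
proof -
  assume H: "Ar f" "Ar g"
  let ?X = "b A"
  have "(i ?X \<otimes> (f \<otimes> g)) \<cdot> NN A (tg f) (tg g) = (dD A \<otimes> i (sr f \<odot> sr g)) \<cdot> ((i (?X\<odot>?X) \<otimes> (f \<otimes> g)) \<cdot> ta ?X ?X (tg f) (tg g))"
    using H by simp
  also have "\<dots> = NN A (sr f) (sr g) \<cdot> ((i ?X \<otimes> f) \<otimes> (i ?X \<otimes> g))"
    using H by (simp add: ta_nat_i12 del: merge merge2)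
  finally show ?thesis .
qed
lemma P13: "NN A K Y \<cdot> ((NK A \<otimes> i (b A \<odot> Y)) \<cdot> l (b A \<odot> Y)) = i (b A) \<otimes> l Y"
proof -
  let ?X = "b A"
  have "NN A K Y \<cdot> ((NK A \<otimes> i (?X \<odot> Y)) \<cdot> l (?X \<odot> Y)) = (dD A \<otimes> i (K\<odot>Y)) \<cdot> (ta ?X ?X K Y \<cdot> ((r ?X \<otimes> i (?X\<odot>Y)) \<cdot> ((e A \<otimes> i (?X\<odot>Y)) \<cdot> l (?X\<odot>Y))))"
    by simp
  also have "\<dots> = (dD A \<otimes> i (K\<odot>Y)) \<cdot> ((i (?X\<odot>?X) \<otimes> l Y) \<cdot> (ai ?X ?X Y \<cdot> ((e A \<otimes> i (?X\<odot>Y)) \<cdot> l (?X\<odot>Y))))"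
    by (simp add: ctx2[OF C2] del: merge merge2)
  also have "\<dots> = (dD A \<otimes> i (K\<odot>Y)) \<cdot> ((i (?X\<odot>?X) \<otimes> l Y) \<cdot> (((e A \<otimes> i ?X) \<otimes> i Y) \<cdot> (ai K ?X Y \<cdot> l (?X\<odot>Y))))"
    by (simp add: ctx2[OF ai_nat_i3] del: merge merge2)
  also have "\<dots> = i ?X \<otimes> l Y"
    by (simp add: K1i)
  finally show ?thesis .
qed
lemma P14: "NN A Y K \<cdot> ((i (b A \<odot> Y) \<otimes> NK A) \<cdot> r (b A \<odot> Y)) = i (b A) \<otimes> r Y"
proof -
  let ?X = "b A"
  have "NN A Y K \<cdot> ((i (?X \<odot> Y) \<otimes> NK A) \<cdot> r (?X \<odot> Y)) = (dD A \<otimes> i (Y\<odot>K)) \<cdot> ((s ?X ?X \<otimes> s Y K) \<cdot> (ta ?X ?X K Y \<cdot> (s (?X\<odot>K) (?X\<odot>Y) \<cdot> ((i (?X\<odot>Y) \<otimes> (r ?X \<cdot> e A)) \<cdot> r (?X\<odot>Y)))))"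
    by (simp only: taYK cassoc)
  also have "\<dots> = (i ?X \<otimes> s Y K) \<cdot> ((dD A \<otimes> i (K\<odot>Y)) \<cdot> (ta ?X ?X K Y \<cdot> (((r ?X \<cdot> e A) \<otimes> i (?X\<odot>Y)) \<cdot> (s K (?X\<odot>Y) \<cdot> r (?X\<odot>Y)))))"
    by (simp add: ctx2[OF s_nat'])
  also have "\<dots> = (i ?X \<otimes> s Y K) \<cdot> (i ?X \<otimes> l Y)"
    using P13 by (simp add: SU del: merge merge2)
  also have "\<dots> = i ?X \<otimes> r Y"
    by (simp add: SU2)
  finally show ?thesis .
qed
lemma P15: "NN A Y Z \<cdot> s (b A\<odot>Y) (b A\<odot>Z) = (i (b A) \<otimes> s Y Z) \<cdot> NN A Z Y"
  by (simp add: C4)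
lemma P17: "MU A K \<cdot> NK A = (i (b A) \<otimes> NK A) \<cdot> NK A"
proof -
  let ?X = "b A"
  have L: "MU A K \<cdot> NK A = (i ?X \<otimes> r ?X) \<cdot> ((e A \<otimes> e A) \<cdot> l K)"
    by (simp add: r_nat ctx2[OF r_nat] ctx2[OF K2] nab_e)
  have R: "(i ?X \<otimes> NK A) \<cdot> NK A = (i ?X \<otimes> r ?X) \<cdot> ((i ?X \<otimes> e A) \<cdot> ((e A \<otimes> i K) \<cdot> r K))"
    by (simp add: r_nat)
  have "(i ?X \<otimes> r ?X) \<cdot> ((i ?X \<otimes> e A) \<cdot> ((e A \<otimes> i K) \<cdot> r K)) = (i ?X \<otimes> r ?X) \<cdot> ((e A \<otimes> e A) \<cdot> l K)"
    by (simp add: K3)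
  then show ?thesis using L R by simp
qed
lemma P18: "ETA A (Y\<odot>Z) \<cdot> NN A Y Z = ETA A Y \<otimes> ETA A Z"
proof -
  have "ETA A (Y\<odot>Z) \<cdot> NN A Y Z = li (Y\<odot>Z) \<cdot> ((li K \<otimes> i (Y\<odot>Z)) \<cdot> (((u A \<otimes> u A) \<otimes> i (Y\<odot>Z)) \<cdot> ta (b A) (b A) Y Z))"
    by (simp add: u_dD)
  also have "\<dots> = li (Y\<odot>Z) \<cdot> ((li K \<otimes> i (Y\<odot>Z)) \<cdot> (ta K K Y Z \<cdot> ((u A \<otimes> i Y) \<otimes> (u A \<otimes> i Z))))"
    by (simp add: ta_nat_i34 del: merge merge2)
  also have "\<dots> = ETA A Y \<otimes> ETA A Z"
    by (simp add: ctx3[OF C7i] del: merge merge2) simp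
  finally show ?thesis .
qed
lemma P19: "ETA A K \<cdot> NK A = i K"
  by (simp add: ctx2[OF r_nat] K3[symmetric])


lemma P12: "(i (b A) \<otimes> a Y1 Y2 Y3) \<cdot> (NN A (Y1\<odot>Y2) Y3 \<cdot> (NN A Y1 Y2 \<otimes> i (b A \<odot> Y3))) =
   NN A Y1 (Y2\<odot>Y3) \<cdot> ((i (b A \<odot> Y1) \<otimes> NN A Y2 Y3) \<cdot> a (b A \<odot> Y1) (b A \<odot> Y2) (b A \<odot> Y3))"
proof -
  let ?X = "b A"
  let ?W = "Y1\<odot>(Y2\<odot>Y3)"
  have "(i ?X \<otimes> a Y1 Y2 Y3) \<cdot> (NN A (Y1\<odot>Y2) Y3 \<cdot> (NN A Y1 Y2 \<otimes> i (?X \<odot> Y3))) =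
     (dD A \<otimes> a Y1 Y2 Y3) \<cdot> (ta ?X ?X (Y1\<odot>Y2) Y3 \<cdot> (((dD A \<otimes> i (Y1\<odot>Y2)) \<otimes> i (?X\<odot>Y3)) \<cdot> (ta ?X ?X Y1 Y2 \<otimes> i (?X\<odot>Y3))))"
    by simp
  also have "\<dots> = (dD A \<otimes> a Y1 Y2 Y3) \<cdot> (((dD A \<otimes> i ?X) \<otimes> i ((Y1\<odot>Y2)\<odot>Y3)) \<cdot> (ta (?X\<odot>?X) ?X (Y1\<odot>Y2) Y3 \<cdot> (ta ?X ?X Y1 Y2 \<otimes> i (?X\<odot>Y3))))"
    by (simp add: ctx2[OF ta_nat_i24] del: merge merge2)
  also have "\<dots> = ((dD A \<cdot> (dD A \<otimes> i ?X)) \<otimes> i ?W) \<cdot> ((i ((?X\<odot>?X)\<odot>?X) \<otimes> a Y1 Y2 Y3) \<cdot> (ta (?X\<odot>?X) ?X (Y1\<odot>Y2) Y3 \<cdot> (ta ?X ?X Y1 Y2 \<otimes> i (?X\<odot>Y3))))"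
    by simp
  also have "\<dots> = ((dD A \<cdot> (dD A \<otimes> i ?X)) \<otimes> i ?W) \<cdot> ((ai ?X ?X ?X \<otimes> i ?W) \<cdot> (ta ?X (?X\<odot>?X) Y1 (Y2\<odot>Y3) \<cdot> ((i (?X\<odot>Y1) \<otimes> ta ?X ?X Y2 Y3) \<cdot> a (?X\<odot>Y1) (?X\<odot>Y2) (?X\<odot>Y3))))"
    by (simp only: C1)
  also have "\<dots> = (dD A \<otimes> i ?W) \<cdot> (((i ?X \<otimes> dD A) \<otimes> i ?W) \<cdot> (ta ?X (?X\<odot>?X) Y1 (Y2\<odot>Y3) \<cdot> ((i (?X\<odot>Y1) \<otimes> ta ?X ?X Y2 Y3) \<cdot> a (?X\<odot>Y1) (?X\<odot>Y2) (?X\<odot>Y3))))"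
    by (simp add: coassoc')
  also have "\<dots> = (dD A \<otimes> i ?W) \<cdot> (ta ?X ?X Y1 (Y2\<odot>Y3) \<cdot> ((i (?X\<odot>Y1) \<otimes> (dD A \<otimes> i (Y2\<odot>Y3))) \<cdot> ((i (?X\<odot>Y1) \<otimes> ta ?X ?X Y2 Y3) \<cdot> a (?X\<odot>Y1) (?X\<odot>Y2) (?X\<odot>Y3))))"
    by (simp add: ctx2[OF ta_nat_v] del: merge merge2)
  also have "\<dots> = NN A Y1 (Y2\<odot>Y3) \<cdot> ((i (?X \<odot> Y1) \<otimes> NN A Y2 Y3) \<cdot> a (?X \<odot> Y1) (?X \<odot> Y2) (?X \<odot> Y3))"
    by simp
  finally show ?thesis .
qed

lemma P16: "MU A (Y\<odot>Z) \<cdot> NN A Y Z = (i (b A) \<otimes> NN A Y Z) \<cdot> (NN A (b A\<odot>Y) (b A\<odot>Z) \<cdot> (MU A Y \<otimes> MU A Z))"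
proof -
  let ?X = "b A"
  have "MU A (Y\<odot>Z) \<cdot> NN A Y Z = a ?X ?X (Y\<odot>Z) \<cdot> (((dD A \<otimes> dD A) \<otimes> i (Y\<odot>Z)) \<cdot> ((ta ?X ?X ?X ?X \<otimes> i (Y\<odot>Z)) \<cdot> (((nab A \<otimes> nab A) \<otimes> i (Y\<odot>Z)) \<cdot> ta ?X ?X Y Z)))"
    by (simp add: nab_dD)
  also have "\<dots> = a ?X ?X (Y\<odot>Z) \<cdot> (((dD A \<otimes> dD A) \<otimes> i (Y\<odot>Z)) \<cdot> ((ta ?X ?X ?X ?X \<otimes> i (Y\<odot>Z)) \<cdot> (ta (?X\<odot>?X) (?X\<odot>?X) Y Z \<cdot> ((nab A \<otimes> i Y) \<otimes> (nab A \<otimes> i Z)))))"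
    by (simp add: ta_nat_i34 ctx2[OF ta_nat_i34] del: merge merge2)
  also have "\<dots> = (dD A \<otimes> (dD A \<otimes> i (Y\<odot>Z))) \<cdot> (a (?X\<odot>?X) (?X\<odot>?X) (Y\<odot>Z) \<cdot> ((ta ?X ?X ?X ?X \<otimes> i (Y\<odot>Z)) \<cdot> (ta (?X\<odot>?X) (?X\<odot>?X) Y Z \<cdot> ((nab A \<otimes> i Y) \<otimes> (nab A \<otimes> i Z)))))"
    by (simp add: ctx2[OF a_nat'] del: merge merge2)
  also have "\<dots> = (dD A \<otimes> (dD A \<otimes> i (Y\<odot>Z))) \<cdot> ((i (?X\<odot>?X) \<otimes> ta ?X ?X Y Z) \<cdot> (ta ?X ?X (?X\<odot>Y) (?X\<odot>Z) \<cdot> ((a ?X ?X Y \<otimes> a ?X ?X Z) \<cdot> ((nab A \<otimes> i Y) \<otimes> (nab A \<otimes> i Z)))))"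
    by (simp only: ctx3[OF TA] cassoc)
  also have "\<dots> = (i ?X \<otimes> NN A Y Z) \<cdot> (NN A (?X\<odot>Y) (?X\<odot>Z) \<cdot> (MU A Y \<otimes> MU A Z))"
    by simp
  finally show ?thesis .
qed

lemma L2: "Ar f \<Longrightarrow> (i (b A) \<otimes> bb f) \<cdot> LAM A (tg f) = LAM A (sr f) \<cdot> bb (i (b A) \<otimes> f)"
  by (simp add: ctx2[OF m_nat'] m_nat')
lemma L3: "MU A (b Y) \<cdot> LAM A Y = (i (b A) \<otimes> LAM A Y) \<cdot> (LAM A (b A \<odot> Y) \<cdot> bb (MU A Y))"
proof -
  let ?X = "b A"
  have "MU A (b Y) \<cdot> LAM A Y = a ?X ?X (b Y) \<cdot> ((((d A \<otimes> d A) \<cdot> (m ?X ?X \<cdot> bb (nab A))) \<otimes> i (b Y)) \<cdot> m ?X Y)"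
    by (simp add: nab_d)
  also have "\<dots> = a ?X ?X (b Y) \<cdot> (((d A \<otimes> d A) \<otimes> i (b Y)) \<cdot> ((m ?X ?X \<otimes> i (b Y)) \<cdot> ((bb (nab A) \<otimes> bb (i Y)) \<cdot> m ?X Y)))"
    by simp
  also have "\<dots> = a ?X ?X (b Y) \<cdot> (((d A \<otimes> d A) \<otimes> i (b Y)) \<cdot> ((m ?X ?X \<otimes> i (b Y)) \<cdot> (m (?X\<odot>?X) Y \<cdot> bb (nab A \<otimes> i Y))))"
    by (simp only: m_nat ctx2[OF m_nat] nab_ty id_ty cassoc)
  also have "\<dots> = (d A \<otimes> (d A \<otimes> i (b Y))) \<cdot> (a (b ?X) (b ?X) (b Y) \<cdot> ((m ?X ?X \<otimes> i (b Y)) \<cdot> (m (?X\<odot>?X) Y \<cdot> bb (nab A \<otimes> i Y))))"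
    by (simp add: ctx2[OF a_nat'] del: merge merge2)
  also have "\<dots> = (d A \<otimes> (d A \<otimes> i (b Y))) \<cdot> ((i (b ?X) \<otimes> m ?X Y) \<cdot> (m ?X (?X\<odot>Y) \<cdot> (bb (a ?X ?X Y) \<cdot> bb (nab A \<otimes> i Y))))"
    by (simp only: ctx3[OF m_assoc] cassoc)
  also have "\<dots> = (i ?X \<otimes> LAM A Y) \<cdot> (LAM A (?X \<odot> Y) \<cdot> bb (MU A Y))"
    by (simp add: bb_cc)
  finally show ?thesis .
qed
lemma L4: "ETA A (b Y) \<cdot> LAM A Y = bb (ETA A Y)"
proof -
  have "ETA A (b Y) \<cdot> LAM A Y = li (b Y) \<cdot> ((mK \<otimes> i (b Y)) \<cdot> ((bb (u A) \<otimes> bb (i Y)) \<cdot> m (b A) Y))"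
    by (simp add: u_d)
  also have "\<dots> = li (b Y) \<cdot> ((mK \<otimes> i (b Y)) \<cdot> (m K Y \<cdot> bb (u A \<otimes> i Y)))"
    by (simp only: m_nat ctx2[OF m_nat] u_ty id_ty cassoc)
  also have "\<dots> = bb (ETA A Y)"
    by (simp add: ctx3[OF m_lui] bb_cc del: merge merge2)
  finally show ?thesis .
qed
lemma L5: "(i (b A) \<otimes> d Y) \<cdot> (LAM A (b Y) \<cdot> bb (LAM A Y)) = LAM A Y \<cdot> d (b A \<odot> Y)"
  by (simp add: d_mon ctx2[OF d_mon] d_d bb_cc ctx2[OF m_nat'] m_nat')
lemma L6: "LAM A Y \<cdot> eps (b A \<odot> Y) = i (b A) \<otimes> eps Y"
  by (simp add: ep_mon ctx2[OF ep_mon])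
lemma L7: "NN A (b Y) (b Z) \<cdot> ((LAM A Y \<otimes> LAM A Z) \<cdot> m (b A \<odot> Y) (b A \<odot> Z)) =
   (i (b A) \<otimes> m Y Z) \<cdot> (LAM A (Y\<odot>Z) \<cdot> bb (NN A Y Z))"
proof -
  let ?X = "b A"
  have "NN A (b Y) (b Z) \<cdot> ((LAM A Y \<otimes> LAM A Z) \<cdot> m (?X \<odot> Y) (?X \<odot> Z)) =
     (dD A \<otimes> i (b Y \<odot> b Z)) \<cdot> (ta ?X ?X (b Y) (b Z) \<cdot> (((d A \<otimes> i (b Y)) \<otimes> (d A \<otimes> i (b Z))) \<cdot> ((m ?X Y \<otimes> m ?X Z) \<cdot> m (?X\<odot>Y) (?X\<odot>Z))))"
    by simp
  also have "\<dots> = (dD A \<otimes> i (b Y \<odot> b Z)) \<cdot> (((d A \<otimes> d A) \<otimes> i (b Y \<odot> b Z)) \<cdot> (ta (b ?X) (b ?X) (b Y) (b Z) \<cdot> ((m ?X Y \<otimes> m ?X Z) \<cdot> m (?X\<odot>Y) (?X\<odot>Z))))"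
    by (simp add: ctx2[OF ta_nat'] del: merge merge2)
  also have "\<dots> = (dD A \<otimes> i (b Y \<odot> b Z)) \<cdot> (((d A \<otimes> d A) \<otimes> i (b Y \<odot> b Z)) \<cdot> ((m ?X ?X \<otimes> m Y Z) \<cdot> (m (?X\<odot>?X) (Y\<odot>Z) \<cdot> bb (ta ?X ?X Y Z))))"
    by (simp only: C9)
  also have "\<dots> = ((d A \<cdot> bb (dD A)) \<otimes> m Y Z) \<cdot> (m (?X\<odot>?X) (Y\<odot>Z) \<cdot> bb (ta ?X ?X Y Z))"
    by (simp add: dD_coalg)
  also have "\<dots> = (d A \<otimes> m Y Z) \<cdot> ((bb (dD A) \<otimes> bb (i (Y\<odot>Z))) \<cdot> (m (?X\<odot>?X) (Y\<odot>Z) \<cdot> bb (ta ?X ?X Y Z)))"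
    by simp
  also have "\<dots> = (d A \<otimes> m Y Z) \<cdot> (m ?X (Y\<odot>Z) \<cdot> (bb (dD A \<otimes> i (Y\<odot>Z)) \<cdot> bb (ta ?X ?X Y Z)))"
    by (simp only: ctx2[OF m_nat] dD_ty id_ty cassoc)
  also have "\<dots> = (i ?X \<otimes> m Y Z) \<cdot> (LAM A (Y\<odot>Z) \<cdot> bb (NN A Y Z))"
    by (simp add: bb_cc)
  finally show ?thesis .
qed
lemma L8: "NK A \<cdot> mK = (i (b A) \<otimes> mK) \<cdot> (LAM A K \<cdot> bb (NK A))"
proof -
  let ?X = "b A"
  have "(i ?X \<otimes> mK) \<cdot> (LAM A K \<cdot> bb (NK A)) = (d A \<otimes> i K) \<cdot> ((i (b ?X) \<otimes> mK) \<cdot> (m ?X K \<cdot> (bb (r ?X) \<cdot> bb (e A))))"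
    by (simp add: bb_cc)
  also have "\<dots> = (d A \<otimes> i K) \<cdot> (r (b ?X) \<cdot> bb (e A))"
    by (simp add: m_ru2 del: merge merge2)
  also have "\<dots> = NK A \<cdot> mK"
    by (simp add: ctx2[OF r_nat] e_coalg)
  finally show ?thesis by simp
qed

end


context MCM begin

lemma bm_simps: "To (bang_monad S M A) X = b A \<odot> X"
  "Tm (bang_monad S M A) f = tnsm S (i (b A)) f"
  "mu (bang_monad S M A) X = a (b A) (b A) X \<bullet> tnsm S (nabla S M A) (i X)"
  "eta (bang_monad S M A) X = li X \<bullet> tnsm S (uu S M A) (i X)"
  "nn (bang_monad S M A) X Y = tnsm S (dD A) (i (X \<odot> Y)) \<bullet> ta (b A) (b A) X Y"
  "nk (bang_monad S M A) = r (b A) \<bullet> e A"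
  "lam (bang_monad S M A) X = tnsm S (d A) (i (b X)) \<bullet> m (b A) X"
  by (simp_all add: bang_monad_def)

lemmas CV = hom_iff cmp_cc tnsm_tt bngm_bb nabla_eq uu_eq bm_simps

lemma SCM: "is_sym_comonoidal_monad S (bang_monad S M A)"
  unfolding is_sym_comonoidal_monad_def Let_def
  apply (intro conjI allI impI)
  subgoal by (simp add: CV)
  subgoal by (simp add: CV)
  subgoal by (simp add: CV)
  subgoal by (simp add: CV)
  subgoal by (simp add: CV)
  subgoal using P5 by (clarsimp simp: CV)
  subgoal using P6 by (clarsimp simp: CV)
  subgoal using P7 by (clarsimp simp: CV)
  subgoal using P8 by (clarsimp simp: CV)
  subgoal using P9 by (clarsimp simp: CV)
  subgoal by (simp add: CV)
  subgoal by (simp add: CV)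
  subgoal using P11 by (clarsimp simp: CV)
  subgoal using P12 by (clarsimp simp: CV)
  subgoal using P13 by (clarsimp simp: CV)
  subgoal using P14 by (clarsimp simp: CV)
  subgoal using P15 by (clarsimp simp: CV)
  subgoal using P16 by (clarsimp simp: CV)
  subgoal using P17 by (clarsimp simp: CV)
  subgoal using P18 by (clarsimp simp: CV)
  subgoal using P19 by (clarsimp simp: CV)
  done


lemma ELM: "is_exp_lifting_monad S M (bang_monad S M A)"
  unfolding is_exp_lifting_monad_def Let_def
  apply (intro conjI allI impI SCM)
  subgoal by (simp add: CV)
  subgoal using L2 by (clarsimp simp: CV)
  subgoal using L3 by (clarsimp simp: CV)
  subgoal using L4 by (clarsimp simp: CV)
  subgoal using L5 by (clarsimp simp: CV)
  subgoal using L6 by (clarsimp simp: CV)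
  subgoal using L7 by (clarsimp simp: CV)
  subgoal using L8 by (clarsimp simp: CV)
  done

end

theorem proposition7p5:
  fixes S :: "('o,'m) smc" and M :: "('o,'m) mcm" and A :: 'o
  assumes "is_additive_smc S"
      and "is_mcm S M"
  shows "is_exp_lifting_monad S M (bang_monad S M A)"
proof -
  interpret MCM S M
    by (intro MCM.intro ASMC.intro MCM_axioms.intro assms)
  show ?thesis by (rule ELM)
qed


end
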